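(* Let $A$ be a uniformly distributed random point on the unit sphere in $\mathbb{R}^3$, let $B=(1,0,0)$ and $C=(0,1,0)$, and let $$\alpha=\arccos\!\left(\frac{(A\times B)\cdot(A\times C)}{\|A\times B\|\,\|A\times C\|}\right)\in[0,\pi]$$ (the dihedral angle along the line through the origin and $A$ between the planes containing $B$ and $C$; defined almost surely). Then $$\mathbb{E}(\alpha)=\frac{\pi}{2},\qquad \mathbb{E}(\alpha^2)=\frac{\pi^2}{4}+\ln(2)^2.$$
   Context: Uniform distribution on the sphere means with respect to normalized surface area measure. Equivalently, $\alpha$ is the angle at vertex $A$ of the spherical triangle $ABC$, whose opposite side has length $\pi/2$. *)

theory Defs
  imports "HOL-Analysis.Analysis" "HOL-Analysis.Cross3"
begin

text \<open>Normalized surface measure (uniform probability distribution) on the unit sphere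
  in R^3, realized as the cone measure: the image of the uniform probability measure
  on the open unit ball under radial projection x \<mapsto> x / |x|.  (The origin, a null
  set, is mapped to 0; this does not affect the distribution.)\<close>
definition sphere_uniform :: "(real^3) measure" where
  "sphere_uniform = distr (uniform_measure lborel (ball 0 1)) lborel (\<lambda>x. x /\<^sub>R norm x)"

definition dihedral_angle :: "real^3 \<Rightarrow> real^3 \<Rightarrow> real^3 \<Rightarrow> real" where
  "dihedral_angle A B C =
     arccos ((cross3 A B \<bullet> cross3 A C) / (norm (cross3 A B) * norm (cross3 A C)))"

end

theory Submission
  imports Defs
begin

definition sD :: "real \<Rightarrow> real \<Rightarrow> real \<Rightarrow> real" where
  "sD p q r = -(p*q) / (sqrt (q^2 + r^2) * sqrt (p^2 + r^2))"

definition D :: "real \<Rightarrow> real \<Rightarrow> real \<Rightarrow> real" where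
  "D p q r = arccos (sD p q r)"

lemma dihedral_D: "dihedral_angle A (vector [1,0,0]) (vector [0,1,0]) = D (A$1) (A$2) (A$3)"
  unfolding dihedral_angle_def D_def sD_def
  by (simp add: cross3_def inner_vec_def sum_3 norm_vec_def L2_set_def power2_eq_square mult_ac add_ac)

lemma sD_bound: "\<bar>sD p q r\<bar> \<le> 1"
proof (cases "sqrt (q^2 + r^2) * sqrt (p^2 + r^2) = 0")
  case True then show ?thesis unfolding sD_def by (simp only: True division_ring_divide_zero)
next
  case False
  hence pos: "sqrt (q^2 + r^2) * sqrt (p^2 + r^2) > 0"
    by (metis mult_nonneg_nonneg order_less_le real_sqrt_ge_zero zero_le_power2 add_nonneg_nonneg)
  have "\<bar>p*q\<bar> = sqrt ((p*q)^2)" by simp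
  also have "\<dots> \<le> sqrt ((q^2 + r^2) * (p^2 + r^2))"
    by (intro real_sqrt_le_mono) (simp add: power_mult_distrib algebra_simps)
  also have "\<dots> = sqrt (q^2 + r^2) * sqrt (p^2 + r^2)" by (simp add: real_sqrt_mult)
  finally show ?thesis using pos by (simp add: sD_def abs_div divide_le_eq_1)
qed

lemma sD_scale: "k > 0 \<Longrightarrow> sD (k*p) (k*q) (k*r) = sD p q r"
proof -
  assume k: "k > 0"
  have a: "sqrt ((k*q)^2 + (k*r)^2) = k * sqrt (q^2+r^2)"
  proof -
    have "sqrt ((k*q)^2 + (k*r)^2) = sqrt (k^2 * (q^2+r^2))" by (simp add: power_mult_distrib algebra_simps)
    also have "\<dots> = k * sqrt (q^2+r^2)" using k by (simp add: real_sqrt_mult)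
    finally show ?thesis .
  qed
  have b: "sqrt ((k*p)^2 + (k*r)^2) = k * sqrt (p^2+r^2)"
  proof -
    have "sqrt ((k*p)^2 + (k*r)^2) = sqrt (k^2 * (p^2+r^2))" by (simp add: power_mult_distrib algebra_simps)
    also have "\<dots> = k * sqrt (p^2+r^2)" using k by (simp add: real_sqrt_mult)
    finally show ?thesis .
  qed
  show ?thesis unfolding sD_def a b using k by (simp add: field_simps)
qed

lemma D_bounds: "0 \<le> D p q r" "D p q r \<le> pi"
  using sD_bound[of p q r] unfolding D_def
  by (auto intro!: arccos_lbound arccos_ubound)

lemma D_arctan:
  assumes "r \<noteq> 0"
  shows "D p q r = pi/2 + arctan (p*q / (\<bar>r\<bar> * sqrt (p^2+q^2+r^2)))"
proof -
  define s where "s = sD p q r"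
  define X where "X = sqrt (q^2 + r^2)"
  define Y where "Y = sqrt (p^2 + r^2)"
  have X: "X > 0" using assms unfolding X_def by (simp add: add_nonneg_pos)
  have Y: "Y > 0" using assms unfolding Y_def by (simp add: add_nonneg_pos)
  have XY: "X^2 * Y^2 = (q^2+r^2)*(p^2+r^2)" unfolding X_def Y_def by simp
  have s: "s = -(p*q)/(X*Y)" unfolding s_def sD_def X_def Y_def ..
  have "s^2 = (p*q)^2/(X*Y)^2" by (simp add: s power_divide)
  hence "1 - s^2 = ((X*Y)^2 - (p*q)^2)/(X*Y)^2" using X Y by (simp add: field_simps)
  also have "(X*Y)^2 - (p*q)^2 = r^2*(p^2+q^2+r^2)" using XY by (simp add: power_mult_distrib algebra_simps)
  finally have key: "1 - s^2 = r^2 * (p^2+q^2+r^2) / (X*Y)^2" .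
  have pos: "r^2 * (p^2+q^2+r^2) > 0" using assms by (intro mult_pos_pos) (auto intro: add_nonneg_pos)
  have "r^2 * (p^2+q^2+r^2) / (X*Y)^2 > 0" using pos X Y by simp
  hence "s^2 < 1" using key by linarith
  hence s1: "-1 < s" "s < 1" by (simp_all add: abs_square_less_1 abs_less_iff)
  have sq: "sqrt (1 - s^2) = \<bar>r\<bar> * sqrt (p^2+q^2+r^2) / (X*Y)"
    using X Y unfolding key by (simp add: real_sqrt_divide real_sqrt_mult)
  have "D p q r = arccos s" unfolding D_def s_def ..
  also have "\<dots> = pi - arccos (-s)" using arccos_minus[of "-s"] s1 by simp
  also have "\<dots> = pi/2 + arctan (-s / sqrt (1 - (-s)^2))" using s1 by (simp add: arccos_arctan)
  also have "-s / sqrt (1 - (-s)^2) = -s / sqrt (1 - s^2)" by simp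
  also have "\<dots> = p*q / (\<bar>r\<bar> * sqrt (p^2+q^2+r^2))"
    using X Y unfolding sq unfolding s by (simp add: field_simps)
  finally show ?thesis .
qed

lemma normalize_D:
  "dihedral_angle (x /\<^sub>R norm x) (vector [1,0,0]) (vector [0,1,0]) = D (x$1) (x$2) (x$3)"
proof (cases "x = 0")
  case True then show ?thesis by (simp add: dihedral_D)
next
  case False
  hence n: "norm x > 0" by simp
  have "D (x$1) (x$2) (x$3) = D (norm x * (x$1/norm x)) (norm x * (x$2/norm x)) (norm x * (x$3/norm x))"
    using n by simp
  also have "\<dots> = D (x$1/norm x) (x$2/norm x) (x$3/norm x)"
    unfolding D_def using sD_scale[OF n, of "x$1/norm x" "x$2/norm x" "x$3/norm x"] by simp
  finally show ?thesis by (simp add: dihedral_D divide_inverse mult.commute)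
qed

definition arccosc :: "real \<Rightarrow> real" where "arccosc y = arccos (max (-1) (min 1 y))"

lemma arccosc_meas[measurable]: "arccosc \<in> borel_measurable borel"
  unfolding arccosc_def[abs_def]
  by (intro borel_measurable_continuous_onI continuous_intros) auto

lemma D_arccosc: "D p q r = arccosc (sD p q r)"
  using sD_bound[of p q r] unfolding D_def arccosc_def by (auto simp add: abs_le_iff max_def min_def)

lemma D_meas[measurable]: "(\<lambda>x. D (f x) (g x) (h x)) \<in> borel_measurable M"
  if [measurable]: "f \<in> borel_measurable M" "g \<in> borel_measurable M" "h \<in> borel_measurable M"
  unfolding D_arccosc sD_def by measurable

definition L3 :: "real \<times> real \<times> real \<Rightarrow> real^3" where
  "L3 p = vector [snd (snd p), fst (snd p), fst p]"

lemma L3_alt: "L3 p = snd (snd p) *\<^sub>R axis 1 1 + fst (snd p) *\<^sub>R axis 2 1 + fst p *\<^sub>R axis 3 1"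
  unfolding L3_def by (simp add: vec_eq_iff forall_3 vector_3 axis_def)

lemma L3_meas[measurable]: "L3 \<in> borel_measurable borel"
  unfolding L3_alt[abs_def]
  by (intro borel_measurable_continuous_onI continuous_intros)

lemma prod_Basis_3: "(\<Prod>b\<in>(Basis::(real^3) set). f b) = f (axis 1 1) * f (axis 2 1) * f (axis 3 1)"
proof -
  have "(Basis::(real^3) set) = (\<lambda>i. axis i 1) ` UNIV" unfolding Basis_vec_def by auto
  also have "\<dots> = {axis 1 1, axis 2 1, axis 3 1}" by (simp add: UNIV_3)
  finally have B: "(Basis::(real^3) set) = {axis 1 1, axis 2 1, axis 3 1}" .
  show ?thesis unfolding B by (simp add: axis_eq_axis mult_ac)
qed

lemma distr_L3: "distr lborel borel L3 = lborel"
proof (rule lborel_eqI[symmetric])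
  fix l u :: "real^3"
  assume le: "\<And>b. b \<in> Basis \<Longrightarrow> l \<bullet> b \<le> u \<bullet> b"
  have le': "l$i \<le> u$i" for i
  proof -
    have "axis i 1 \<in> (Basis::(real^3) set)" by (auto simp: Basis_vec_def)
    from le[OF this] show ?thesis by (simp add: inner_axis)
  qed
  have pre: "L3 -` box l u = Sigma {l$3<..<u$3} (\<lambda>_. Sigma {l$2<..<u$2} (\<lambda>_. {l$1<..<u$1}))"
    by (auto simp: L3_def box_def Basis_vec_def inner_axis forall_3 vector_3)
  have "emeasure (distr lborel borel L3) (box l u) = emeasure lborel (L3 -` box l u)"
    by (subst emeasure_distr) auto
  also have "\<dots> = emeasure (lborel \<Otimes>\<^sub>M (lborel::(real\<times>real) measure)) (Sigma {l$3<..<u$3} (\<lambda>_. Sigma {l$2<..<u$2} (\<lambda>_. {l$1<..<u$1})))"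
    by (simp only: pre lborel_prod)
  also have "\<dots> = emeasure lborel {l$3<..<u$3} * emeasure (lborel::(real\<times>real) measure) (Sigma {l$2<..<u$2} (\<lambda>_. {l$1<..<u$1}))"
    by (rule lborel.emeasure_pair_measure_Times) (auto intro!: borel_open open_Times)
  also have "emeasure (lborel::(real\<times>real) measure) (Sigma {l$2<..<u$2} (\<lambda>_. {l$1<..<u$1}))
     = emeasure lborel {l$2<..<u$2} * emeasure lborel {l$1<..<u$1}"
    by (subst lborel_prod[symmetric]) (rule lborel.emeasure_pair_measure_Times, auto)
  also have "emeasure lborel {l$3<..<u$3} * (emeasure lborel {l$2<..<u$2} * emeasure lborel {l$1<..<u$1})
      = ennreal ((u$3 - l$3) * ((u$2 - l$2) * (u$1 - l$1)))"
    using le'[of 1] le'[of 2] le'[of 3] by (simp add: ennreal_mult)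
  also have "\<dots> = (\<Prod>b\<in>Basis. (u - l) \<bullet> b)"
    by (simp add: prod_Basis_3 inner_axis mult_ac)
  finally show "emeasure (distr lborel borel L3) (box l u) = (\<Prod>b\<in>Basis. (u - l) \<bullet> b)" .
qed simp

lemma nn_integral_real3:
  fixes h :: "real^3 \<Rightarrow> ennreal"
  assumes [measurable]: "h \<in> borel_measurable borel"
  shows "(\<integral>\<^sup>+x. h x \<partial>lborel) = (\<integral>\<^sup>+a. \<integral>\<^sup>+b. \<integral>\<^sup>+c. h (vector [c,b,a]) \<partial>lborel \<partial>lborel \<partial>lborel)"
proof -
  have "(\<integral>\<^sup>+x. h x \<partial>lborel) = (\<integral>\<^sup>+p. h (L3 p) \<partial>lborel)"
    by (subst distr_L3[symmetric]) (simp add: nn_integral_distr)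
  also have "\<dots> = (\<integral>\<^sup>+p. h (L3 p) \<partial>(lborel \<Otimes>\<^sub>M (lborel \<Otimes>\<^sub>M lborel)))"
    by (simp add: lborel_prod)
  also have "\<dots> = (\<integral>\<^sup>+a. \<integral>\<^sup>+q. h (L3 (a,q)) \<partial>(lborel::(real\<times>real) measure) \<partial>lborel)"
    by (subst lborel.nn_integral_fst) (simp_all add: lborel_prod)
  also have "\<dots> = (\<integral>\<^sup>+a. \<integral>\<^sup>+q. h (L3 (a,q)) \<partial>(lborel \<Otimes>\<^sub>M lborel) \<partial>lborel)"
    by (simp add: lborel_prod)
  also have "\<dots> = (\<integral>\<^sup>+a. \<integral>\<^sup>+b. \<integral>\<^sup>+c. h (L3 (a,b,c)) \<partial>lborel \<partial>lborel \<partial>lborel)"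
    by (intro nn_integral_cong lborel.nn_integral_fst[symmetric]) (simp add: lborel_prod)
  finally show ?thesis by (simp add: L3_def)
qed

lemma SUP_ind:
  fixes h :: real
  assumes S: "incseq S" and h: "0 \<le> h"
  shows "(SUP n. ennreal (h * indicator (S n) x)) = ennreal (h * indicator (\<Union>n. S n) x)"
proof (cases "x \<in> (\<Union>n. S n)")
  case True
  then obtain N where N: "x \<in> S N" by auto
  show ?thesis
  proof (rule antisym)
    show "(SUP n. ennreal (h * indicator (S n) x)) \<le> ennreal (h * indicator (\<Union>n. S n) x)"
      using True h by (intro SUP_least) (auto simp: indicator_def)
    show "ennreal (h * indicator (\<Union>n. S n) x) \<le> (SUP n. ennreal (h * indicator (S n) x))"
      using True N by (intro SUP_upper2[of N]) (auto simp: indicator_def)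
  qed
next
  case False
  then show ?thesis by (auto simp: indicator_def)
qed

lemma nn_subst_open:
  fixes f g g' :: "real \<Rightarrow> real" and a b :: real
  assumes f[measurable]: "f \<in> borel_measurable borel" and fnn: "\<And>x. 0 \<le> f x"
  and ab: "a < b"
  and deriv: "\<And>x. x \<in> {a<..<b} \<Longrightarrow> (g has_real_derivative g' x) (at x)"
  and cont: "continuous_on {a<..<b} g'"
  and nn: "\<And>x. x \<in> {a<..<b} \<Longrightarrow> 0 \<le> g' x"
  and surj: "\<And>y. \<exists>x\<in>{a<..<b}. g x = y"
  shows "(\<integral>\<^sup>+y. ennreal (f y) \<partial>lborel) = (\<integral>\<^sup>+x. ennreal (f (g x) * g' x * indicator {a<..<b} x) \<partial>lborel)"
proof -
  define lo where "lo n = a + (b-a)/(real n + 3)" for n :: nat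
  define hi where "hi n = b - (b-a)/(real n + 3)" for n :: nat
  have lo: "a < lo n" for n using ab by (simp add: lo_def)
  have hi: "hi n < b" for n using ab by (simp add: hi_def)
  have lohi: "lo n < hi n" for n
  proof -
    have "a * real n \<le> b * real n" using ab by (intro mult_right_mono) auto
    hence "2 * ((b-a)/(real n + 3)) < b - a" using ab by (simp add: field_simps)
    then show ?thesis by (simp add: lo_def hi_def)
  qed
  have lo_mono: "lo m \<le> lo n" if "n \<le> m" for m n
    using ab that unfolding lo_def by (intro add_left_mono divide_left_mono) auto
  have hi_mono: "hi n \<le> hi m" if "n \<le> m" for m n
    using ab that unfolding hi_def by (intro diff_left_mono divide_left_mono) auto
  have gmono: "g x \<le> g y" if "a < x" "x \<le> y" "y < b" for x y
    using that by (intro DERIV_nonneg_imp_nondecreasing[of x y g]) (auto intro!: exI deriv nn)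
  define T where "T n = {lo n..hi n}" for n
  define S where "S n = {g (lo n)..g (hi n)}" for n
  have T_inc: "incseq T" unfolding T_def incseq_def using lo_mono hi_mono by auto
  have S_inc: "incseq S" unfolding S_def incseq_def
  proof (intro allI impI subsetI)
    fix m n x assume mn: "m \<le> n" and x: "x \<in> {g (lo m)..g (hi m)}"
    have "g (lo n) \<le> g (lo m)" using lo_mono[OF mn] lo[of n] lohi[of m] hi[of m] by (intro gmono) auto
    moreover have "g (hi m) \<le> g (hi n)" using hi_mono[OF mn] lo[of m] lohi[of m] hi[of n] by (intro gmono) auto
    ultimately show "x \<in> {g (lo n)..g (hi n)}" using x by auto
  qed
  have T_Un: "(\<Union>n. T n) = {a<..<b}"
  proof safe
    fix x n assume "x \<in> T n" then show "x \<in> {a<..<b}"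
      using lo[of n] hi[of n] by (auto simp: T_def)
  next
    fix x assume x: "x \<in> {a<..<b}"
    obtain n1 :: nat where n1: "(b-a)/(x-a) < real n1" using reals_Archimedean2 by blast
    obtain n2 :: nat where n2: "(b-a)/(b-x) < real n2" using reals_Archimedean2 by blast
    have "lo (n1+n2) \<le> lo n1" by (rule lo_mono) simp
    also have "lo n1 \<le> x"
    proof -
      have "(b-a) < real n1 * (x-a)" using n1 x by (simp add: field_simps)
      hence "(b-a)/(real n1 + 3) \<le> x - a" using x by (simp add: field_simps)
      thus ?thesis by (simp add: lo_def)
    qed
    finally have 1: "lo (n1+n2) \<le> x" .
    have "x \<le> hi n2"
    proof -
      have "(b-a) < real n2 * (b-x)" using n2 x by (simp add: field_simps)
      hence "(b-a)/(real n2 + 3) \<le> b - x" using x by (simp add: field_simps)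
      thus ?thesis by (simp add: hi_def)
    qed
    also have "hi n2 \<le> hi (n1+n2)" by (rule hi_mono) simp
    finally have 2: "x \<le> hi (n1+n2)" .
    from 1 2 show "x \<in> (\<Union>n. T n)" by (auto simp: T_def)
  qed
  have S_Un: "(\<Union>n. S n) = UNIV"
  proof safe
    fix y :: real
    obtain x where x: "x \<in> {a<..<b}" "g x = y" using surj by blast
    then obtain n where "x \<in> T n" using T_Un by blast
    hence "lo n \<le> x" "x \<le> hi n" by (auto simp: T_def)
    hence "g (lo n) \<le> y" "y \<le> g (hi n)" using x lo[of n] hi[of n] gmono by auto
    thus "y \<in> (\<Union>n. S n)" by (auto simp: S_def)
  qed simp
  have sub: "(\<integral>\<^sup>+y. ennreal (f y * indicator (S n) y) \<partial>lborel) =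
        (\<integral>\<^sup>+x. ennreal (f (g x) * g' x * indicator (T n) x) \<partial>lborel)" for n
    unfolding S_def T_def
  proof (rule nn_integral_substitution)
    show "set_borel_measurable borel {g (lo n)..g (hi n)} f"
      unfolding set_borel_measurable_def by measurable
    show "(g has_real_derivative g' x) (at x)" if "x \<in> {lo n..hi n}" for x
      using that lo[of n] hi[of n] by (intro deriv) auto
    show "continuous_on {lo n..hi n} g'"
      using lo[of n] hi[of n] by (intro continuous_on_subset[OF cont]) auto
    show "0 \<le> g' x" if "x \<in> {lo n..hi n}" for x
      using that lo[of n] hi[of n] by (intro nn) auto
    show "lo n \<le> hi n" using lohi[of n] by simp
  qed
  have gmeas: "(\<lambda>x. f (g x) * g' x * indicator (T n) x) \<in> borel_measurable borel" for n
  proof -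
    have cg: "continuous_on (T n) g"
      by (rule continuous_at_imp_continuous_on)
         (use lo[of n] hi[of n] in \<open>auto simp: T_def intro!: DERIV_isCont deriv\<close>)
    have cg': "continuous_on (T n) g'" unfolding T_def
      using lo[of n] hi[of n] by (intro continuous_on_subset[OF cont]) auto
    have Tb: "T n \<in> sets borel" by (simp add: T_def)
    have m1[measurable]: "(\<lambda>x. indicator (T n) x *\<^sub>R g x) \<in> borel_measurable borel"
      by (rule borel_measurable_continuous_on_indicator[OF Tb cg])
    have m2[measurable]: "(\<lambda>x. indicator (T n) x *\<^sub>R g' x) \<in> borel_measurable borel"
      by (rule borel_measurable_continuous_on_indicator[OF Tb cg'])
    have m3[measurable]: "T n \<in> sets borel" by (rule Tb)
    have "(\<lambda>x. f (indicator (T n) x *\<^sub>R g x) * (indicator (T n) x *\<^sub>R g' x) * indicator (T n) x) \<in> borel_measurable borel"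
      by measurable
    also have "(\<lambda>x. f (indicator (T n) x *\<^sub>R g x) * (indicator (T n) x *\<^sub>R g' x) * indicator (T n) x)
        = (\<lambda>x. f (g x) * g' x * indicator (T n) x)"
      by (auto simp: indicator_def)
    finally show ?thesis .
  qed
  have "(\<integral>\<^sup>+y. ennreal (f y) \<partial>lborel) = (\<integral>\<^sup>+y. (SUP n. ennreal (f y * indicator (S n) y)) \<partial>lborel)"
    using SUP_ind[OF S_inc fnn] S_Un by simp
  also have "\<dots> = (SUP n. \<integral>\<^sup>+y. ennreal (f y * indicator (S n) y) \<partial>lborel)"
  proof (rule nn_integral_monotone_convergence_SUP)
    show "incseq (\<lambda>n y. ennreal (f y * indicator (S n) y))"
      using S_inc fnn unfolding incseq_def le_fun_def
      by (auto intro!: ennreal_leI mult_left_mono simp: indicator_def subset_eq)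
    show "(\<lambda>y. ennreal (f y * indicator (S n) y)) \<in> borel_measurable lborel" for n
      by (simp add: S_def)
  qed
  also have "\<dots> = (SUP n. \<integral>\<^sup>+x. ennreal (f (g x) * g' x * indicator (T n) x) \<partial>lborel)"
    using sub by simp
  also have "\<dots> = (\<integral>\<^sup>+x. (SUP n. ennreal (f (g x) * g' x * indicator (T n) x)) \<partial>lborel)"
  proof (rule nn_integral_monotone_convergence_SUP[symmetric])
    show "incseq (\<lambda>n x. ennreal (f (g x) * g' x * indicator (T n) x))"
      using T_inc fnn T_Un unfolding incseq_def le_fun_def
      by (auto intro!: ennreal_leI mult_left_mono simp: indicator_def subset_eq
               intro: mult_nonneg_nonneg nn)
    show "(\<lambda>x. ennreal (f (g x) * g' x * indicator (T n) x)) \<in> borel_measurable lborel" for n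
      using gmeas[of n] by simp
  qed
  also have "\<dots> = (\<integral>\<^sup>+x. ennreal (f (g x) * g' x * indicator {a<..<b} x) \<partial>lborel)"
  proof (rule nn_integral_cong)
    fix x
    show "(SUP n. ennreal (f (g x) * g' x * indicator (T n) x)) = ennreal (f (g x) * g' x * indicator {a<..<b} x)"
    proof (cases "x \<in> {a<..<b}")
      case True
      then show ?thesis using SUP_ind[OF T_inc, of "f (g x) * g' x" x] T_Un fnn nn by simp
    next
      case False
      then have "x \<notin> T n" for n using T_Un by blast
      then show ?thesis using False by simp
    qed
  qed
  finally show ?thesis .
qed

lemma g_deriv:
  assumes "rho > 0" "-1 < u" "u < 1"
  shows "((\<lambda>u. rho * u / sqrt (1 - u^2)) has_real_derivative rho / ((1 - u^2) * sqrt (1 - u^2))) (at u)"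
proof -
  have p: "1 - u^2 > 0" using assms by (simp add: abs_square_less_1 abs_less_iff)
  have "((\<lambda>u. rho * u / sqrt (1 - u^2)) has_real_derivative 
     (rho * sqrt (1 - u^2) - rho * u * (inverse (sqrt (1 - u^2)) / 2 * (- (2 * u)))) / (sqrt (1 - u^2))^2) (at u)"
    using p by (auto intro!: derivative_eq_intros simp: power2_eq_square)
  also have "(rho * sqrt (1 - u^2) - rho * u * (inverse (sqrt (1 - u^2)) / 2 * (- (2 * u)))) / (sqrt (1 - u^2))^2
      = rho / ((1 - u^2) * sqrt (1 - u^2))"
  proof -
    define w where "w = sqrt (1 - u^2)"
    have w: "w > 0" "w^2 = 1 - u^2" using p by (auto simp: w_def)
    have w2: "w*w = 1 - u*u" using w(2) by (simp add: power2_eq_square)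
    have e: "rho*(u*u) + rho*(w*w) = rho" by (simp add: w2 algebra_simps)
    show ?thesis unfolding w_def[symmetric] w(2)[symmetric] using w(1) e
      by (simp add: field_simps power2_eq_square)
  qed
  finally show ?thesis .
qed

lemma c_subst:
  fixes f :: "real \<Rightarrow> real"
  assumes rho: "rho > 0" and f[measurable]: "f \<in> borel_measurable borel" and fnn: "\<And>x. 0 \<le> f x"
  shows "(\<integral>\<^sup>+c. ennreal (f c) \<partial>lborel) =
    (\<integral>\<^sup>+u. ennreal (f (rho * u / sqrt (1 - u^2)) * (rho / ((1 - u^2) * sqrt (1 - u^2))) * indicator {-1<..<1} u) \<partial>lborel)"
proof (rule nn_subst_open[OF f fnn])
  show "(- 1::real) < 1" by simp
  show "((\<lambda>u. rho * u / sqrt (1 - u^2)) has_real_derivative rho / ((1 - x^2) * sqrt (1 - x^2))) (at x)"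
    if "x \<in> {-1<..<1}" for x using that rho by (intro g_deriv) auto
  have p: "1 - x^2 > 0" if "x \<in> {-1<..<1}" for x :: real
    using that by (simp add: abs_square_less_1 abs_less_iff)
  show "continuous_on {-1<..<1} (\<lambda>x. rho / ((1 - x^2) * sqrt (1 - x^2)))"
    apply (intro continuous_intros)
    using p by (force simp: less_le)+
  show "0 \<le> rho / ((1 - x^2) * sqrt (1 - x^2))" if "x \<in> {-1<..<1}" for x
    using p[OF that] rho by simp
  show "\<exists>x\<in>{-1<..<1}. rho * x / sqrt (1 - x^2) = y" for y
  proof
    define s where "s = sqrt (y^2 + rho^2)"
    have s: "s > 0" "s^2 = y^2 + rho^2" using rho by (auto simp: s_def add_nonneg_pos)
    have ys: "\<bar>y\<bar> < s" using rho unfolding s_def by (intro real_less_rsqrt) simp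
    show "y / s \<in> {-1<..<1}" using ys s by (auto simp: abs_less_iff field_simps)
    have "1 - (y/s)^2 = (s^2 - y^2)/s^2" using s(1) by (simp add: field_simps)
    also have "\<dots> = (rho/s)^2" using s by (simp add: power_divide)
    finally have "1 - (y/s)^2 = (rho/s)^2" .
    hence "sqrt (1 - (y/s)^2) = rho / s" using rho s by simp
    thus "rho * (y/s) / sqrt (1 - (y/s)^2) = y" using rho s by simp
  qed
qed

lemma pointwise:
  fixes a b u :: real
  assumes a: "a \<noteq> 0" and u: "-1 < u" "u < 1"
  defines "rho \<equiv> sqrt (a^2 + b^2)"
  defines "c \<equiv> rho * u / sqrt (1 - u^2)"
  shows "c^2 + b^2 + a^2 = rho^2 / (1 - u^2)"
    and "D c b a = pi/2 + arctan (u * b / \<bar>a\<bar>)"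
proof -
  have p: "1 - u^2 > 0" using u by (simp add: abs_square_less_1 abs_less_iff)
  have r: "rho > 0" using a unfolding rho_def by (simp add: add_pos_nonneg)
  have r2: "rho^2 = a^2 + b^2" unfolding rho_def by simp
  have s2: "(sqrt (1 - u^2))^2 = 1 - u^2" using p by simp
  show e: "c^2 + b^2 + a^2 = rho^2 / (1 - u^2)"
    unfolding c_def using p by (simp add: power_divide power_mult_distrib s2 r2 field_simps)
  have sq: "sqrt (c^2 + b^2 + a^2) = rho / sqrt (1 - u^2)"
    unfolding e using r p by (simp add: real_sqrt_divide)
  have "D c b a = pi/2 + arctan (c * b / (\<bar>a\<bar> * sqrt (c^2 + b^2 + a^2)))"
    using D_arctan[OF a] by simp
  also have "c * b / (\<bar>a\<bar> * sqrt (c^2 + b^2 + a^2)) = c * b / (\<bar>a\<bar> * (rho / sqrt (1 - u^2)))"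
    by (simp only: sq)
  also have "\<dots> = u * b / \<bar>a\<bar>"
    unfolding c_def using r p a by (simp add: field_simps)
  finally show "D c b a = pi/2 + arctan (u * b / \<bar>a\<bar>)" .
qed

lemma open_closed_nn:
  fixes f :: "real \<Rightarrow> real" and a b :: real
  shows
  "(\<integral>\<^sup>+x. ennreal (f x * indicator {a<..<b} x) \<partial>lborel) = (\<integral>\<^sup>+x. ennreal (f x) * indicator {a..b} x \<partial>lborel)"
proof (rule nn_integral_cong_AE)
  have "AE x in lborel. x \<noteq> a" "AE x in lborel. x \<noteq> b" by (rule AE_lborel_singleton)+
  then show "AE x in lborel. ennreal (f x * indicator {a<..<b} x) = ennreal (f x) * indicator {a..b} x"
  proof eventually_elim
    case (elim x)
    have i: "indicator {a<..<b} x = (indicator {a..b} x :: real)" using elim by (auto simp: indicator_def)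
    show ?case unfolding i by (cases "x \<in> {a..b}") auto
  qed
qed

lemma a_integral:
  assumes R: "R > 0"
  shows "(\<integral>\<^sup>+a. ennreal (a^2 * (if a^2 < R then 1 else 0)) \<partial>lborel) = ennreal (2/3 * sqrt R ^ 3)"
proof -
  have eq: "(if a^2 < R then 1 else 0) = indicator {-sqrt R<..<sqrt R} a" for a :: real
  proof -
    have "a^2 < R \<longleftrightarrow> \<bar>a\<bar> < sqrt R" by (metis real_sqrt_abs real_sqrt_less_iff)
    then show ?thesis by (auto simp: indicator_def abs_less_iff)
  qed
  have "(\<integral>\<^sup>+a. ennreal (a^2 * (if a^2 < R then 1 else 0)) \<partial>lborel)
      = (\<integral>\<^sup>+a. ennreal (a^2 * indicator {-sqrt R<..<sqrt R} a) \<partial>lborel)"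
    by (simp add: eq)
  also have "\<dots> = (\<integral>\<^sup>+a. ennreal (a^2) * indicator {-sqrt R..sqrt R} a \<partial>lborel)"
    by (rule open_closed_nn)
  also have "\<dots> = (\<lambda>x. x^3/3) (sqrt R) - (\<lambda>x. x^3/3) (- sqrt R)"
    using R by (intro nn_integral_FTC_Icc) (auto intro!: derivative_eq_intros simp: power2_eq_square power3_eq_cube)
  also have "\<dots> = 2/3 * sqrt R ^ 3" by simp
  finally show ?thesis by simp
qed

definition Kf :: "(real \<Rightarrow> real) \<Rightarrow> real \<Rightarrow> real \<Rightarrow> real \<Rightarrow> real" where
  "Kf F a t u = F (pi/2 + arctan (u*t)) * a^2 * sqrt (1+t^2) / ((1-u^2) * sqrt (1-u^2))
      * (if a^2*(1+t^2) < 1-u^2 then 1 else 0) * indicator {-1<..<1} u"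

lemma Kf_meas[measurable]:
  assumes [measurable]: "F \<in> borel_measurable borel" "f \<in> borel_measurable M" "g \<in> borel_measurable M" "h \<in> borel_measurable M"
  shows "(\<lambda>x. Kf F (f x) (g x) (h x)) \<in> borel_measurable M"
  unfolding Kf_def by measurable

lemma Kf_nonneg:
  assumes "\<And>x. 0 \<le> F x" shows "0 \<le> Kf F a t u"
proof (cases "u \<in> {-1<..<1}")
  case True
  hence "1 - u^2 > 0" by (simp add: abs_square_less_1 abs_less_iff)
  then show ?thesis using assms unfolding Kf_def by simp
qed (simp add: Kf_def)

definition Jf :: "(real \<Rightarrow> real) \<Rightarrow> real \<Rightarrow> real \<Rightarrow> real \<Rightarrow> real" where
  "Jf F a b u = F (pi/2 + arctan (u*b/\<bar>a\<bar>)) * (if a^2+b^2 < 1-u^2 then 1 else 0)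
      * (sqrt (a^2+b^2) / ((1-u^2) * sqrt (1-u^2))) * indicator {-1<..<1} u"

lemma Jf_meas[measurable]:
  assumes [measurable]: "F \<in> borel_measurable borel" "f \<in> borel_measurable M" "g \<in> borel_measurable M" "h \<in> borel_measurable M"
  shows "(\<lambda>x. Jf F (f x) (g x) (h x)) \<in> borel_measurable M"
  unfolding Jf_def by measurable

lemma inner_c:
  assumes Fm[measurable]: "F \<in> borel_measurable borel" and Fnn: "\<And>x. 0 \<le> F x" and a: "a \<noteq> 0"
  shows "(\<integral>\<^sup>+c. ennreal (if c^2+b^2+a^2 < 1 then F (D c b a) else 0) \<partial>lborel) = (\<integral>\<^sup>+u. ennreal (Jf F a b u) \<partial>lborel)"
proof -
  define rho where "rho = sqrt (a^2+b^2)"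
  have r: "rho > 0" using a unfolding rho_def by (simp add: add_pos_nonneg)
  have "(\<integral>\<^sup>+c. ennreal (if c^2+b^2+a^2 < 1 then F (D c b a) else 0) \<partial>lborel) =
    (\<integral>\<^sup>+u. ennreal ((\<lambda>c. if c^2+b^2+a^2 < 1 then F (D c b a) else 0) (rho * u / sqrt (1 - u^2))
       * (rho / ((1 - u^2) * sqrt (1 - u^2))) * indicator {-1<..<1} u) \<partial>lborel)"
    by (rule c_subst[OF r]) (auto simp: Fnn)
  also have "\<dots> = (\<integral>\<^sup>+u. ennreal (Jf F a b u) \<partial>lborel)"
  proof (rule nn_integral_cong)
    fix u :: real
    show "ennreal ((\<lambda>c. if c^2+b^2+a^2 < 1 then F (D c b a) else 0) (rho * u / sqrt (1 - u^2))
       * (rho / ((1 - u^2) * sqrt (1 - u^2))) * indicator {-1<..<1} u) = ennreal (Jf F a b u)"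
    proof (cases "u \<in> {-1<..<1}")
      case True
      hence u: "-1 < u" "u < 1" by auto
      have p: "1 - u^2 > 0" using u by (simp add: abs_square_less_1 abs_less_iff)
      note pw = pointwise[OF a u, of b, folded rho_def]
      have r2: "rho^2 = a^2+b^2" unfolding rho_def by simp
      have cond: "(rho * u / sqrt (1 - u^2))^2 + b^2 + a^2 < 1 \<longleftrightarrow> a^2+b^2 < 1-u^2"
        unfolding pw(1) using p by (simp add: r2 divide_less_eq)
      show ?thesis using True unfolding Jf_def cond pw(2) rho_def[symmetric] by simp
    next
      case False
      then show ?thesis by (simp add: Jf_def)
    qed
  qed
  finally show ?thesis .
qed

lemma inner_bc:
  assumes Fm[measurable]: "F \<in> borel_measurable borel" and Fnn: "\<And>x. 0 \<le> F x" and a: "a \<noteq> 0"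
  shows "(\<integral>\<^sup>+b. \<integral>\<^sup>+c. ennreal (if c^2+b^2+a^2 < 1 then F (D c b a) else 0) \<partial>lborel \<partial>lborel)
     = (\<integral>\<^sup>+t. \<integral>\<^sup>+u. ennreal (Kf F a t u) \<partial>lborel \<partial>lborel)"
proof -
  have aa: "\<bar>a\<bar> \<noteq> 0" using a by simp
  have "(\<integral>\<^sup>+b. \<integral>\<^sup>+c. ennreal (if c^2+b^2+a^2 < 1 then F (D c b a) else 0) \<partial>lborel \<partial>lborel)
      = (\<integral>\<^sup>+b. \<integral>\<^sup>+u. ennreal (Jf F a b u) \<partial>lborel \<partial>lborel)"
    by (intro nn_integral_cong inner_c[OF Fm Fnn a])
  also have "\<dots> = \<bar>\<bar>a\<bar>\<bar> * (\<integral>\<^sup>+t. \<integral>\<^sup>+u. ennreal (Jf F a (0 + \<bar>a\<bar> * t) u) \<partial>lborel \<partial>lborel)"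
    by (rule nn_integral_real_affine[OF _ aa]) measurable
  also have "\<dots> = (\<integral>\<^sup>+t. \<integral>\<^sup>+u. ennreal (\<bar>a\<bar>) * ennreal (Jf F a (\<bar>a\<bar> * t) u) \<partial>lborel \<partial>lborel)"
    by (simp add: nn_integral_cmult[symmetric])
  also have "\<dots> = (\<integral>\<^sup>+t. \<integral>\<^sup>+u. ennreal (Kf F a t u) \<partial>lborel \<partial>lborel)"
  proof (intro nn_integral_cong)
    fix t u :: real
    have s: "sqrt (a^2 + (\<bar>a\<bar>*t)^2) = \<bar>a\<bar> * sqrt (1+t^2)"
    proof -
      have "a^2 + (\<bar>a\<bar>*t)^2 = a^2 * (1+t^2)" by (simp add: power_mult_distrib algebra_simps)
      thus ?thesis by (simp add: real_sqrt_mult)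
    qed
    have c: "a^2 + (\<bar>a\<bar>*t)^2 < 1-u^2 \<longleftrightarrow> a^2*(1+t^2) < 1-u^2"
      by (simp add: power_mult_distrib algebra_simps)
    have e: "u * (\<bar>a\<bar>*t) / \<bar>a\<bar> = u * t" using a by simp
    have "\<bar>a\<bar> * Jf F a (\<bar>a\<bar> * t) u = Kf F a t u"
      unfolding Jf_def Kf_def s c e by (simp add: field_simps power2_eq_square abs_mult_self_eq)
    moreover have "0 \<le> Jf F a (\<bar>a\<bar> * t) u"
      using Kf_nonneg[of F a t u, OF Fnn] a
      by (simp add: \<open>\<bar>a\<bar> * Jf F a (\<bar>a\<bar> * t) u = Kf F a t u\<close>[symmetric] zero_le_mult_iff)
    ultimately show "ennreal (\<bar>a\<bar>) * ennreal (Jf F a (\<bar>a\<bar> * t) u) = ennreal (Kf F a t u)"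
      by (simp add: ennreal_mult[symmetric])
  qed
  finally show ?thesis .
qed

lemma aux_alg: "(P::real) > 0 \<Longrightarrow> w1 > 0 \<Longrightarrow> Q > 0 \<Longrightarrow> w2 > 0 \<Longrightarrow>
  X * w2 / (P*w1) * (2/3 * (P*w1/(Q*w2))) = 2/3*(X/Q)"
  by (simp add: field_simps)

lemma Kf_a:
  assumes Fnn: "\<And>x. 0 \<le> F x"
  shows "(\<integral>\<^sup>+a. ennreal (Kf F a t u) \<partial>lborel) = ennreal (2/3 * (F (pi/2 + arctan (u*t)) / (1+t^2)) * indicator {-1<..<1} u)"
proof (cases "u \<in> {-1<..<1}")
  case True
  have p: "1 - u^2 > 0" using True by (simp add: abs_square_less_1 abs_less_iff)
  have q: "1 + t^2 > 0" by (simp add: add_pos_nonneg)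
  define C where "C = F (pi/2 + arctan (u*t)) * sqrt (1+t^2) / ((1-u^2) * sqrt (1-u^2))"
  define R where "R = (1-u^2)/(1+t^2)"
  have C: "C \<ge> 0" unfolding C_def using p Fnn by simp
  have R: "R > 0" unfolding R_def using p q by simp
  have K: "Kf F a t u = C * (a^2 * (if a^2 < R then 1 else 0))" for a
  proof -
    have "a^2*(1+t^2) < 1-u^2 \<longleftrightarrow> a^2 < R" unfolding R_def using q by (simp add: less_divide_eq)
    then show ?thesis unfolding Kf_def C_def using True by simp
  qed
  have "(\<integral>\<^sup>+a. ennreal (Kf F a t u) \<partial>lborel) = (\<integral>\<^sup>+a. ennreal C * ennreal (a^2 * (if a^2 < R then 1 else 0)) \<partial>lborel)"
    unfolding K using C by (intro nn_integral_cong) (simp add: ennreal_mult)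
  also have "\<dots> = ennreal C * ennreal (2/3 * sqrt R ^ 3)"
    by (simp add: nn_integral_cmult a_integral[OF R])
  also have "\<dots> = ennreal (C * (2/3 * sqrt R ^ 3))" by (rule ennreal_mult[symmetric]) (use C R in auto)
  also have "C * (2/3 * sqrt R ^ 3) = 2/3 * (F (pi/2 + arctan (u*t)) / (1+t^2))"
  proof -
    have "sqrt R ^ 3 = sqrt R ^ 2 * sqrt R" by (simp add: power3_eq_cube power2_eq_square)
    also have "\<dots> = R * sqrt R" using R by simp
    also have "\<dots> = (1-u^2) * sqrt (1-u^2) / ((1+t^2) * sqrt (1+t^2))"
      unfolding R_def using p q by (simp add: real_sqrt_divide field_simps)
    finally have "sqrt R ^ 3 = (1-u^2) * sqrt (1-u^2) / ((1+t^2) * sqrt (1+t^2))" .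
    then show ?thesis unfolding C_def using p q by (simp only:) (rule aux_alg, auto)
  qed
  finally show ?thesis using True by simp
qed (simp add: Kf_def)

lemma tonelli3:
  assumes [measurable]: "F \<in> borel_measurable borel"
  shows "(\<integral>\<^sup>+a. \<integral>\<^sup>+t. \<integral>\<^sup>+u. ennreal (Kf F a t u) \<partial>lborel \<partial>lborel \<partial>lborel) = (\<integral>\<^sup>+t. \<integral>\<^sup>+u. \<integral>\<^sup>+a. ennreal (Kf F a t u) \<partial>lborel \<partial>lborel \<partial>lborel)"
proof -
  have m1: "(\<lambda>(a, t). \<integral>\<^sup>+u. ennreal (Kf F a t u) \<partial>lborel) \<in> borel_measurable (lborel \<Otimes>\<^sub>M lborel)"
    by measurable
  have "(\<integral>\<^sup>+a. \<integral>\<^sup>+t. \<integral>\<^sup>+u. ennreal (Kf F a t u) \<partial>lborel \<partial>lborel \<partial>lborel) = (\<integral>\<^sup>+t. \<integral>\<^sup>+a. \<integral>\<^sup>+u. ennreal (Kf F a t u) \<partial>lborel \<partial>lborel \<partial>lborel)"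
    by (rule lborel_pair.Fubini'[symmetric]) (rule m1)
  also have "\<dots> = (\<integral>\<^sup>+t. \<integral>\<^sup>+u. \<integral>\<^sup>+a. ennreal (Kf F a t u) \<partial>lborel \<partial>lborel \<partial>lborel)"
  proof (rule nn_integral_cong)
    fix t
    show "(\<integral>\<^sup>+a. \<integral>\<^sup>+u. ennreal (Kf F a t u) \<partial>lborel \<partial>lborel) = (\<integral>\<^sup>+u. \<integral>\<^sup>+a. ennreal (Kf F a t u) \<partial>lborel \<partial>lborel)"
      by (rule lborel_pair.Fubini'[symmetric]) measurable
  qed
  finally show ?thesis .
qed

lemma master:
  assumes Fm[measurable]: "F \<in> borel_measurable borel" and Fnn: "\<And>x. 0 \<le> F x"
  shows "(\<integral>\<^sup>+A. ennreal (F (dihedral_angle A (vector [1,0,0]) (vector [0,1,0]))) \<partial>sphere_uniform)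
    = ennreal (1/(2*pi)) * (\<integral>\<^sup>+t. \<integral>\<^sup>+u. ennreal (F (pi/2 + arctan (u*t)) / (1+t^2) * indicator {-1<..<1} u) \<partial>lborel \<partial>lborel)"
proof -
  let ?U = "uniform_measure lborel (ball (0::real^3) 1)"
  have N[measurable]: "(\<lambda>x::real^3. x /\<^sub>R norm x) \<in> borel_measurable borel" by measurable
  have Dm[measurable]: "(\<lambda>x::real^3. ennreal (F (D (x$1) (x$2) (x$3)))) \<in> borel_measurable borel"
    by measurable
  have s1: "(\<integral>\<^sup>+A. ennreal (F (dihedral_angle A (vector [1,0,0]) (vector [0,1,0]))) \<partial>sphere_uniform)
     = (\<integral>\<^sup>+x. ennreal (F (D (x$1) (x$2) (x$3))) \<partial>?U)"
  proof -
    have m: "(\<lambda>A. ennreal (F (dihedral_angle A (vector [1,0,0]) (vector [0,1,0])))) \<in> borel_measurable lborel"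
      unfolding dihedral_D using Dm by simp
    have m2: "(\<lambda>x::real^3. x /\<^sub>R norm x) \<in> measurable ?U lborel"
      by (simp add: measurable_cong_sets[OF sets_uniform_measure refl])
    show ?thesis unfolding sphere_uniform_def
      apply (subst nn_integral_distr[OF m2])
      using m apply simp
      by (simp only: normalize_D)
  qed
  also have s2: "\<dots> = (\<integral>\<^sup>+x. ennreal (F (D (x$1) (x$2) (x$3))) * indicator (ball (0::real^3) 1) x \<partial>lborel) / emeasure lborel (ball (0::real^3) 1)"
    by (rule nn_integral_uniform_measure) auto
  also have s3: "emeasure lborel (ball (0::real^3) 1) = ennreal (4/3*pi)"
    by (simp add: emeasure_ball unit_ball_vol_3)
  also have s4: "(\<integral>\<^sup>+x. ennreal (F (D (x$1) (x$2) (x$3))) * indicator (ball (0::real^3) 1) x \<partial>lborel)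
     = (\<integral>\<^sup>+a. \<integral>\<^sup>+b. \<integral>\<^sup>+c. ennreal (if c^2+b^2+a^2 < 1 then F (D c b a) else 0) \<partial>lborel \<partial>lborel \<partial>lborel)"
  proof -
    have "(\<integral>\<^sup>+x. ennreal (F (D (x$1) (x$2) (x$3))) * indicator (ball (0::real^3) 1) x \<partial>lborel)
      = (\<integral>\<^sup>+a. \<integral>\<^sup>+b. \<integral>\<^sup>+c. (\<lambda>x. ennreal (F (D (x$1) (x$2) (x$3))) * indicator (ball (0::real^3) 1) x) (vector [c,b,a]) \<partial>lborel \<partial>lborel \<partial>lborel)"
      by (rule nn_integral_real3) (intro borel_measurable_times_ennreal borel_measurable_indicator Dm, simp)
    also have "\<dots> = (\<integral>\<^sup>+a. \<integral>\<^sup>+b. \<integral>\<^sup>+c. ennreal (if c^2+b^2+a^2 < 1 then F (D c b a) else 0) \<partial>lborel \<partial>lborel \<partial>lborel)"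
    proof (intro nn_integral_cong)
      fix a b c :: real
      have "vector [c,b,a] \<in> ball (0::real^3) 1 \<longleftrightarrow> c^2+b^2+a^2 < 1"
        by (simp add: norm_vec_def L2_set_def sum_3 vector_3 power2_eq_square)
      then show "(\<lambda>x. ennreal (F (D (x$1) (x$2) (x$3))) * indicator (ball (0::real^3) 1) x) (vector [c,b,a])
         = ennreal (if c^2+b^2+a^2 < 1 then F (D c b a) else 0)"
        by (simp add: vector_3 indicator_def)
    qed
    finally show ?thesis .
  qed
  also have s5: "(\<integral>\<^sup>+a. \<integral>\<^sup>+b. \<integral>\<^sup>+c. ennreal (if c^2+b^2+a^2 < 1 then F (D c b a) else 0) \<partial>lborel \<partial>lborel \<partial>lborel)
     = (\<integral>\<^sup>+a. \<integral>\<^sup>+t. \<integral>\<^sup>+u. ennreal (Kf F a t u) \<partial>lborel \<partial>lborel \<partial>lborel)"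
  proof (rule nn_integral_cong_AE)
    have "AE a in lborel. a \<noteq> (0::real)" by (rule AE_lborel_singleton)
    then show "AE a in lborel. (\<integral>\<^sup>+b. \<integral>\<^sup>+c. ennreal (if c^2+b^2+a^2 < 1 then F (D c b a) else 0) \<partial>lborel \<partial>lborel)
       = (\<integral>\<^sup>+t. \<integral>\<^sup>+u. ennreal (Kf F a t u) \<partial>lborel \<partial>lborel)"
      by eventually_elim (rule inner_bc[OF Fm Fnn])
  qed
  also have s6: "\<dots> = (\<integral>\<^sup>+t. \<integral>\<^sup>+u. \<integral>\<^sup>+a. ennreal (Kf F a t u) \<partial>lborel \<partial>lborel \<partial>lborel)"
    by (rule tonelli3[OF Fm])
  also have s7: "\<dots> = (\<integral>\<^sup>+t. \<integral>\<^sup>+u. ennreal (2/3) * ennreal (F (pi/2 + arctan (u*t)) / (1+t^2) * indicator {-1<..<1} u) \<partial>lborel \<partial>lborel)"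
  proof (intro nn_integral_cong)
    fix t u :: real
    have "0 \<le> F (pi/2 + arctan (u*t)) / (1+t^2) * indicator {-1<..<1} u"
      using Fnn by (simp add: add_pos_nonneg)
    then show "(\<integral>\<^sup>+a. ennreal (Kf F a t u) \<partial>lborel) = ennreal (2/3) * ennreal (F (pi/2 + arctan (u*t)) / (1+t^2) * indicator {-1<..<1} u)"
      by (simp add: Kf_a[OF Fnn] ennreal_mult[symmetric] mult.assoc)
  qed
  also have s8: "\<dots> = ennreal (2/3) * (\<integral>\<^sup>+t. \<integral>\<^sup>+u. ennreal (F (pi/2 + arctan (u*t)) / (1+t^2) * indicator {-1<..<1} u) \<partial>lborel \<partial>lborel)"
    by (simp add: nn_integral_cmult)
  finally have "(\<integral>\<^sup>+A. ennreal (F (dihedral_angle A (vector [1,0,0]) (vector [0,1,0]))) \<partial>sphere_uniform) =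
     ennreal (2/3) * (\<integral>\<^sup>+t. \<integral>\<^sup>+u. ennreal (F (pi/2 + arctan (u*t)) / (1+t^2) * indicator {-1<..<1} u) \<partial>lborel \<partial>lborel) / ennreal (4/3*pi)" .
  also have "\<dots> = (\<integral>\<^sup>+t. \<integral>\<^sup>+u. ennreal (F (pi/2 + arctan (u*t)) / (1+t^2) * indicator {-1<..<1} u) \<partial>lborel \<partial>lborel) * (ennreal (2/3) / ennreal (4/3*pi))"
    by (simp only: divide_ennreal_def mult_ac)
  also have "ennreal (2/3) / ennreal (4/3*pi) = ennreal (1/(2*pi))"
    by (subst divide_ennreal) (auto simp: field_simps)
  finally show ?thesis by (simp add: mult.commute)
qed

lemma nn_sym:
  fixes f :: "real \<Rightarrow> ennreal"
  assumes [measurable]: "f \<in> borel_measurable borel"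
  shows "(\<integral>\<^sup>+x. f x \<partial>lborel) = (\<integral>\<^sup>+x. f (-x) \<partial>lborel)"
  using nn_integral_real_affine[of f "-1" 0] by simp

lemma nn_half:
  fixes f :: "real \<Rightarrow> ennreal"
  assumes [measurable]: "f \<in> borel_measurable borel"
  shows "2 * (\<integral>\<^sup>+x. f x \<partial>lborel) = (\<integral>\<^sup>+x. f x + f (-x) \<partial>lborel)"
proof -
  have "(\<integral>\<^sup>+x. f x + f (-x) \<partial>lborel) = (\<integral>\<^sup>+x. f x \<partial>lborel) + (\<integral>\<^sup>+x. f (-x) \<partial>lborel)"
    by (rule nn_integral_add) auto
  also have "(\<integral>\<^sup>+x. f (-x) \<partial>lborel) = (\<integral>\<^sup>+x. f x \<partial>lborel)" by (rule nn_sym[symmetric]) simp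
  finally show ?thesis by (simp add: mult_2)
qed

lemma even_nn:
  fixes f :: "real \<Rightarrow> ennreal"
  assumes [measurable]: "f \<in> borel_measurable borel" and ev: "\<And>x. f (-x) = f x"
  shows "(\<integral>\<^sup>+x. f x \<partial>lborel) = 2 * (\<integral>\<^sup>+x. f x * indicator {0..} x \<partial>lborel)"
proof -
  have "(\<integral>\<^sup>+x. f x \<partial>lborel) = (\<integral>\<^sup>+x. f x * indicator {0..} x + f x * indicator {..<0} x \<partial>lborel)"
    by (intro nn_integral_cong) (auto simp: indicator_def)
  also have "\<dots> = (\<integral>\<^sup>+x. f x * indicator {0..} x \<partial>lborel) + (\<integral>\<^sup>+x. f x * indicator {..<0} x \<partial>lborel)"
    by (rule nn_integral_add) auto
  also have "(\<integral>\<^sup>+x. f x * indicator {..<0} x \<partial>lborel) = (\<integral>\<^sup>+x. f (-x) * indicator {..<0} (-x) \<partial>lborel)"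
    by (rule nn_sym) simp
  also have "\<dots> = (\<integral>\<^sup>+x. f x * indicator {0..} x \<partial>lborel)"
  proof (rule nn_integral_cong_AE)
    have "AE x in lborel. x \<noteq> (0::real)" by (rule AE_lborel_singleton)
    then show "AE x in lborel. f (-x) * indicator {..<0} (-x) = f x * indicator {0..} x"
      by eventually_elim (auto simp: ev indicator_def)
  qed
  finally show ?thesis by (simp add: mult_2)
qed

lemma cauchy_half: "(\<integral>\<^sup>+t. ennreal (1/(1+t^2)) * indicator {0..} t \<partial>lborel) = ennreal (pi/2)"
proof -
  have "(\<integral>\<^sup>+t. ennreal (1/(1+t^2)) * indicator {0..} t \<partial>lborel) = ennreal (pi/2 - arctan 0)"
    by (rule nn_integral_FTC_atLeast)
       (auto intro!: derivative_eq_intros tendsto_arctan_at_top simp: add_pos_nonneg power2_eq_square inverse_eq_divide)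
  then show ?thesis by simp
qed

lemma cauchy_full: "(\<integral>\<^sup>+t. ennreal (1/(1+t^2)) \<partial>lborel) = ennreal pi"
proof -
  have e: "ennreal pi = 2 * ennreal (pi/2)"
    using ennreal_mult[of 2 "pi/2"] by simp
  show ?thesis by (subst even_nn) (auto simp: cauchy_half e)
qed

lemma E1_inner:
  "(\<integral>\<^sup>+u. ennreal (\<bar>pi/2 + arctan (u*t)\<bar> / (1+t^2) * indicator {-1<..<1} u) \<partial>lborel) = ennreal (pi/(1+t^2))"
proof -
  let ?h = "\<lambda>u. ennreal (\<bar>pi/2 + arctan (u*t)\<bar> / (1+t^2) * indicator {-1<..<1} u)"
  have q: "1 + t^2 > 0" by (simp add: add_pos_nonneg)
  have "2 * (\<integral>\<^sup>+u. ?h u \<partial>lborel) = (\<integral>\<^sup>+u. ?h u + ?h (-u) \<partial>lborel)"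
    by (rule nn_half) measurable
  also have "\<dots> = (\<integral>\<^sup>+u. ennreal (pi/(1+t^2)) * indicator {-1<..<1::real} u \<partial>lborel)"
  proof (intro nn_integral_cong)
    fix u :: real
    have i: "indicator {-1<..<1} (-u) = (indicator {-1<..<1} u :: real)" by (auto simp: indicator_def)
    have b1: "0 \<le> pi/2 + arctan (u*t)" "0 \<le> pi/2 - arctan (u*t)"
      using arctan_bounded[of "u*t"] by auto
    have "?h u + ?h (-u) = ennreal ((pi/2 + arctan (u*t)) / (1+t^2) * indicator {-1<..<1} u
         + (pi/2 - arctan (u*t)) / (1+t^2) * indicator {-1<..<1} u)"
      using b1 q by (simp add: i arctan_minus)
    also have "\<dots> = ennreal (pi/(1+t^2)) * indicator {-1<..<1} u"
      by (cases "u \<in> {-1<..<1}") (simp_all add: add_divide_distrib[symmetric])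
    finally show "?h u + ?h (-u) = ennreal (pi/(1+t^2)) * indicator {-1<..<1} u" .
  qed
  also have "\<dots> = ennreal (pi/(1+t^2)) * 2" by (simp add: nn_integral_cmult_indicator)
  finally have "2 * (\<integral>\<^sup>+u. ?h u \<partial>lborel) = 2 * ennreal (pi/(1+t^2))" by (simp add: mult.commute)
  then show ?thesis by (simp add: ennreal_mult_cancel_left)
qed

lemma E1: "(\<integral>\<^sup>+t. \<integral>\<^sup>+u. ennreal (\<bar>pi/2 + arctan (u*t)\<bar> / (1+t^2) * indicator {-1<..<1} u) \<partial>lborel \<partial>lborel) = ennreal (pi^2)"
proof -
  have "(\<integral>\<^sup>+t. \<integral>\<^sup>+u. ennreal (\<bar>pi/2 + arctan (u*t)\<bar> / (1+t^2) * indicator {-1<..<1} u) \<partial>lborel \<partial>lborel)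
     = (\<integral>\<^sup>+t. ennreal pi * ennreal (1/(1+t^2)) \<partial>lborel)"
    by (intro nn_integral_cong, subst E1_inner) (simp add: ennreal_mult[symmetric] add_pos_nonneg)
  also have "\<dots> = ennreal pi * ennreal pi" by (simp add: nn_integral_cmult cauchy_full)
  finally show ?thesis by (simp add: ennreal_mult[symmetric] power2_eq_square)
qed

lemma aux2: "(q::real) > 0 \<Longrightarrow> (p/2 + x)^2/q + (p/2 - x)^2/q = 2*(p^2/(4*q) + x^2/q)"
  by (simp add: field_simps power2_eq_square)

lemma E2_inner:
  fixes t :: real
  shows "(\<integral>\<^sup>+u. ennreal ((pi/2 + arctan (u*t))^2 / (1+t^2) * indicator {-1<..<1} u) \<partial>lborel)
   = ennreal (pi^2/(4*(1+t^2))) * 2 + (\<integral>\<^sup>+u. ennreal (arctan (u*t)^2 / (1+t^2) * indicator {-1<..<1} u) \<partial>lborel)"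
proof -
  let ?h = "\<lambda>u. ennreal ((pi/2 + arctan (u*t))^2 / (1+t^2) * indicator {-1<..<1} u)"
  let ?A = "\<lambda>u. ennreal (arctan (u*t)^2 / (1+t^2) * indicator {-1<..<1} u)"
  have q: "1 + t^2 > 0" by (simp add: add_pos_nonneg)
  have "2 * (\<integral>\<^sup>+u. ?h u \<partial>lborel) = (\<integral>\<^sup>+u. ?h u + ?h (-u) \<partial>lborel)"
    by (rule nn_half) measurable
  also have "\<dots> = (\<integral>\<^sup>+u. 2 * (ennreal (pi^2/(4*(1+t^2))) * indicator {-1<..<1::real} u + ?A u) \<partial>lborel)"
  proof (intro nn_integral_cong)
    fix u :: real
    have i: "indicator {-1<..<1} (-u) = (indicator {-1<..<1} u :: real)" by (auto simp: indicator_def)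
    show "?h u + ?h (-u) = 2 * (ennreal (pi^2/(4*(1+t^2))) * indicator {-1<..<1::real} u + ?A u)"
    proof (cases "u \<in> {-1<..<1}")
      case True
      have "?h u + ?h (-u) = ennreal ((pi/2 + arctan (u*t))^2 / (1+t^2) + (pi/2 - arctan (u*t))^2 / (1+t^2))"
        using True q by (simp add: i arctan_minus)
      also have "(pi/2 + arctan (u*t))^2 / (1+t^2) + (pi/2 - arctan (u*t))^2 / (1+t^2)
          = 2 * (pi^2/(4*(1+t^2)) + arctan (u*t)^2 / (1+t^2))"
        using q by (rule aux2)
      also have "ennreal \<dots> = 2 * ennreal (pi^2/(4*(1+t^2)) + arctan (u*t)^2 / (1+t^2))"
        by (subst ennreal_mult) (use q in auto)
      also have "ennreal (pi^2/(4*(1+t^2)) + arctan (u*t)^2 / (1+t^2)) = ennreal (pi^2/(4*(1+t^2))) + ennreal (arctan (u*t)^2 / (1+t^2))"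
        by (rule ennreal_plus) (use q in auto)
      finally show ?thesis using True by simp
    next
      case False
      then show ?thesis by (simp add: i)
    qed
  qed
  also have "\<dots> = 2 * (\<integral>\<^sup>+u. ennreal (pi^2/(4*(1+t^2))) * indicator {-1<..<1::real} u + ?A u \<partial>lborel)"
    by (rule nn_integral_cmult) measurable
  also have "(\<integral>\<^sup>+u. ennreal (pi^2/(4*(1+t^2))) * indicator {-1<..<1::real} u + ?A u \<partial>lborel)
     = (\<integral>\<^sup>+u. ennreal (pi^2/(4*(1+t^2))) * indicator {-1<..<1::real} u \<partial>lborel) + (\<integral>\<^sup>+u. ?A u \<partial>lborel)"
    by (rule nn_integral_add) measurable
  also have "(\<integral>\<^sup>+u. ennreal (pi^2/(4*(1+t^2))) * indicator {-1<..<1::real} u \<partial>lborel) = ennreal (pi^2/(4*(1+t^2))) * 2"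
    by (simp add: nn_integral_cmult_indicator)
  finally have "2 * (\<integral>\<^sup>+u. ?h u \<partial>lborel) = 2 * (ennreal (pi^2/(4*(1+t^2))) * 2 + (\<integral>\<^sup>+u. ?A u \<partial>lborel))" .
  then show ?thesis by (simp only: ennreal_mult_cancel_left) simp
qed

lemma E2:
  "(\<integral>\<^sup>+t. \<integral>\<^sup>+u. ennreal ((pi/2 + arctan (u*t))^2 / (1+t^2) * indicator {-1<..<1} u) \<partial>lborel \<partial>lborel)
   = ennreal (pi^3/2) + (\<integral>\<^sup>+t. \<integral>\<^sup>+u. ennreal (arctan (u*t)^2 / (1+t^2) * indicator {-1<..<1} u) \<partial>lborel \<partial>lborel)"
proof -
  have "(\<integral>\<^sup>+t. \<integral>\<^sup>+u. ennreal ((pi/2 + arctan (u*t))^2 / (1+t^2) * indicator {-1<..<1} u) \<partial>lborel \<partial>lborel)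
    = (\<integral>\<^sup>+t. ennreal (pi^2/4*2) * ennreal (1/(1+t^2)) + (\<integral>\<^sup>+u. ennreal (arctan (u*t)^2 / (1+t^2) * indicator {-1<..<1} u) \<partial>lborel) \<partial>lborel)"
  proof (intro nn_integral_cong)
    fix t :: real
    have q: "1 + t^2 > 0" by (simp add: add_pos_nonneg)
    have r: "pi^2/(4*(1+t^2)) * 2 = pi^2/4*2 * (1/(1+t^2))" using q by (simp add: field_simps)
    have "ennreal (pi^2/(4*(1+t^2))) * 2 = ennreal (pi^2/(4*(1+t^2)) * 2)" by (subst ennreal_mult) (use q in auto)
    also have "\<dots> = ennreal (pi^2/4*2 * (1/(1+t^2)))" by (simp only: r)
    also have "\<dots> = ennreal (pi^2/4*2) * ennreal (1/(1+t^2))" by (rule ennreal_mult) (use q in auto)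
    finally have "ennreal (pi^2/(4*(1+t^2))) * 2 = ennreal (pi^2/4*2) * ennreal (1/(1+t^2))" .
    then show "(\<integral>\<^sup>+u. ennreal ((pi/2 + arctan (u*t))^2 / (1+t^2) * indicator {-1<..<1} u) \<partial>lborel)
      = ennreal (pi^2/4*2) * ennreal (1/(1+t^2)) + (\<integral>\<^sup>+u. ennreal (arctan (u*t)^2 / (1+t^2) * indicator {-1<..<1} u) \<partial>lborel)"
      by (simp only: E2_inner)
  qed
  also have "\<dots> = (\<integral>\<^sup>+t. ennreal (pi^2/4*2) * ennreal (1/(1+t^2)) \<partial>lborel) + (\<integral>\<^sup>+t. \<integral>\<^sup>+u. ennreal (arctan (u*t)^2 / (1+t^2) * indicator {-1<..<1} u) \<partial>lborel \<partial>lborel)"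
    by (rule nn_integral_add) measurable
  also have "(\<integral>\<^sup>+t. ennreal (pi^2/4*2) * ennreal (1/(1+t^2)) \<partial>lborel) = ennreal (pi^3/2)"
  proof -
    have m: "(\<lambda>t::real. ennreal (1/(1+t^2))) \<in> borel_measurable lborel" by measurable
    have "(\<integral>\<^sup>+t. ennreal (pi^2/4*2) * ennreal (1/(1+t^2)) \<partial>lborel) = ennreal (pi^2/4*2) * (\<integral>\<^sup>+t. ennreal (1/(1+t^2)) \<partial>lborel)"
      by (rule nn_integral_cmult[OF m])
    also have "\<dots> = ennreal (pi^2/4*2) * ennreal pi" by (simp only: cauchy_full)
    also have "\<dots> = ennreal (pi^3/2)" by (subst ennreal_mult[symmetric]) (auto simp: power3_eq_cube power2_eq_square)
    finally show ?thesis .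
  qed
  finally show ?thesis .
qed

definition "Dl s r = (1-s^2)*(1-r^2)*(s^2-r^2)"
definition "cA s r = -(s^2-r^2) / Dl s r"
definition "cB s r = s^2*(1-r^2) / Dl s r"
definition "cC s r = -(r^2*(1-s^2)) / Dl s r"

lemma Dl_nz: "0 < s \<Longrightarrow> 0 < r \<Longrightarrow> s < 1 \<Longrightarrow> r < 1 \<Longrightarrow> s \<noteq> r \<Longrightarrow> Dl s r \<noteq> (0::real)"
proof -
  assume a: "0 < s" "0 < r" "s < 1" "r < 1" "s \<noteq> r"
  have "Dl s r = ((1-s)*(1+s))*((1-r)*(1+r))*((s-r)*(s+r))" unfolding Dl_def by algebra
  moreover have "(1-s)*(1+s) \<noteq> 0" "(1-r)*(1+r) \<noteq> 0" "(s-r)*(s+r) \<noteq> 0" using a by auto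
  ultimately show ?thesis by simp
qed

lemma frac3: "(p::real) \<noteq> 0 \<Longrightarrow> q \<noteq> 0 \<Longrightarrow> w \<noteq> 0 \<Longrightarrow> a/p + b/q + c/w = (a*q*w + b*p*w + c*p*q)/(p*q*w)"
  by (simp add: field_simps)

lemma pf_ident:
  fixes s r T :: real
  assumes a: "0 < s" "0 < r" "s < 1" "r < 1" "s \<noteq> r" and T: "0 \<le> T"
  shows "cA s r / (1+T) + cB s r / (1+s^2*T) + cC s r / (1+r^2*T) = T/((1+T)*(1+s^2*T)*(1+r^2*T))"
proof -
  have c: "1 + T \<noteq> 0" "1 + s^2*T \<noteq> 0" "1 + r^2*T \<noteq> 0" using T
    by (auto simp: add_pos_nonneg) (smt (verit) zero_le_mult_iff zero_le_power2)+
  have D: "Dl s r \<noteq> 0" using Dl_nz[OF a] .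
  have "cA s r / (1+T) + cB s r / (1+s^2*T) + cC s r / (1+r^2*T) =
    (cA s r*(1+s^2*T)*(1+r^2*T) + cB s r*(1+T)*(1+r^2*T) + cC s r*(1+T)*(1+s^2*T))/((1+T)*(1+s^2*T)*(1+r^2*T))"
    by (rule frac3[OF c])
  also have "cA s r*(1+s^2*T)*(1+r^2*T) + cB s r*(1+T)*(1+r^2*T) + cC s r*(1+T)*(1+s^2*T)
     = (-(s^2-r^2)*(1+s^2*T)*(1+r^2*T) + s^2*(1-r^2)*(1+T)*(1+r^2*T) + -(r^2*(1-s^2))*(1+T)*(1+s^2*T)) / Dl s r"
    unfolding cA_def cB_def cC_def using D by (simp add: field_simps)
  also have "-(s^2-r^2)*(1+s^2*T)*(1+r^2*T) + s^2*(1-r^2)*(1+T)*(1+r^2*T) + -(r^2*(1-s^2))*(1+T)*(1+s^2*T) = Dl s r * T"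
    unfolding Dl_def by algebra
  finally show ?thesis using D by simp
qed

lemma pf_sum:
  fixes s r :: real
  assumes a: "0 < s" "0 < r" "s < 1" "r < 1" "s \<noteq> r"
  shows "cA s r + cB s r / s + cC s r / r = 1/((1+s)*(1+r)*(s+r))"
proof -
  have D: "Dl s r \<noteq> 0" using Dl_nz[OF a] .
  have "cA s r + cB s r / s + cC s r / r = (-(s^2-r^2) + s*(1-r^2) - r*(1-s^2)) / Dl s r"
    unfolding cA_def cB_def cC_def using a by (simp add: add_divide_distrib diff_divide_distrib power2_eq_square)
  also have "-(s^2-r^2) + s*(1-r^2) - r*(1-s^2) = ((s-r)*(1-s)*(1-r)) * 1" by algebra
  also have "Dl s r = ((s-r)*(1-s)*(1-r)) * ((1+s)*(1+r)*(s+r))" unfolding Dl_def by algebra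
  also have "((s-r)*(1-s)*(1-r)) * 1 / (((s-r)*(1-s)*(1-r)) * ((1+s)*(1+r)*(s+r))) = 1/((1+s)*(1+r)*(s+r))"
    by (rule mult_divide_mult_cancel_left) (use a in auto)
  finally show ?thesis .
qed

lemma arctan_scaled_lim: "(c::real) > 0 \<Longrightarrow> ((\<lambda>t. arctan (c*t)) \<longlongrightarrow> pi/2) at_top"
  by (rule filterlim_compose[OF tendsto_arctan_at_top])
     (auto intro!: filterlim_tendsto_pos_mult_at_top filterlim_ident)

lemma T_int:
  fixes s r :: real
  assumes a: "0 < s" "0 < r" "s < 1" "r < 1" "s \<noteq> r"
  shows "(\<integral>\<^sup>+t. ennreal (t^2/((1+t^2)*(1+s^2*t^2)*(1+r^2*t^2))) * indicator {0..} t \<partial>lborel)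
     = ennreal (pi/(2*((1+s)*(1+r)*(s+r))))"
proof -
  define Fa where "Fa t = cA s r * arctan t + (cB s r/s) * arctan (s*t) + (cC s r/r) * arctan (r*t)" for t
  have pos: "1 + t^2 > 0" "1 + s^2*t^2 > 0" "1 + r^2*t^2 > 0" for t :: real
    by (auto simp: add_pos_nonneg)
  have d: "DERIV Fa t :> t^2/((1+t^2)*(1+s^2*t^2)*(1+r^2*t^2))" for t
  proof -
    have "DERIV Fa t :> cA s r / (1+t^2) + cB s r / (1+s^2*t^2) + cC s r / (1+r^2*t^2)"
      unfolding Fa_def[abs_def]
      apply (rule derivative_eq_intros refl)+
      using a pos[of t] by (simp add: field_simps power2_eq_square)
    also have "cA s r / (1+t^2) + cB s r / (1+s^2*t^2) + cC s r / (1+r^2*t^2) = t^2/((1+t^2)*(1+s^2*t^2)*(1+r^2*t^2))"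
      by (rule pf_ident[OF a]) simp
    finally show ?thesis .
  qed
  have lim: "(Fa \<longlongrightarrow> cA s r * (pi/2) + (cB s r/s) * (pi/2) + (cC s r/r) * (pi/2)) at_top"
    unfolding Fa_def[abs_def] using a
    by (intro tendsto_intros tendsto_arctan_at_top arctan_scaled_lim) auto
  have "(\<integral>\<^sup>+t. ennreal (t^2/((1+t^2)*(1+s^2*t^2)*(1+r^2*t^2))) * indicator {0..} t \<partial>lborel)
      = ennreal (cA s r * (pi/2) + (cB s r/s) * (pi/2) + (cC s r/r) * (pi/2) - Fa 0)"
    by (rule nn_integral_FTC_atLeast[OF _ d _ lim]) (use pos in auto)
  also have "cA s r * (pi/2) + (cB s r/s) * (pi/2) + (cC s r/r) * (pi/2) - Fa 0 = pi/2 * (cA s r + cB s r/s + cC s r/r)"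
    by (simp add: Fa_def algebra_simps)
  also have "\<dots> = pi/(2*((1+s)*(1+r)*(s+r)))" by (simp add: pf_sum[OF a])
  finally show ?thesis .
qed

definition Phi :: "real \<Rightarrow> real \<Rightarrow> real \<Rightarrow> real \<Rightarrow> real" where
  "Phi t u s r = t^2/((1+t^2)*(1+s^2*t^2)*(1+r^2*t^2)) * indicator {0..u} s * indicator {0..u} r
     * indicator {0..<1} u * indicator {0..} t"

lemma Phi_meas[measurable]:
  assumes [measurable]: "f \<in> borel_measurable M" "g \<in> borel_measurable M" "h \<in> borel_measurable M" "k \<in> borel_measurable M"
  shows "(\<lambda>x. Phi (f x) (g x) (h x) (k x)) \<in> borel_measurable M"
proof -
  have e: "indicator {0..g x} (h x) = (if 0 \<le> h x \<and> h x \<le> g x then 1 else (0::real))"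
          "indicator {0..g x} (k x) = (if 0 \<le> k x \<and> k x \<le> g x then 1 else (0::real))" for x
    by (auto simp: indicator_def)
  show ?thesis unfolding Phi_def e by measurable
qed

lemma Phi_nonneg: "0 \<le> Phi t u s r"
  unfolding Phi_def by (auto intro!: mult_nonneg_nonneg divide_nonneg_pos simp: add_pos_nonneg)

lemma arctan_int:
  assumes "0 \<le> u" "0 \<le> t"
  shows "(\<integral>\<^sup>+s. ennreal (t/(1+s^2*t^2)) * indicator {0..u} s \<partial>lborel) = ennreal (arctan (u*t))"
proof -
  have "(\<integral>\<^sup>+s. ennreal (t/(1+s^2*t^2)) * indicator {0..u} s \<partial>lborel) = ennreal ((\<lambda>s. arctan (s*t)) u - (\<lambda>s. arctan (s*t)) 0)"
    by (rule nn_integral_FTC_Icc)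
       (use assms in \<open>auto intro!: derivative_eq_intros simp: add_pos_nonneg power2_eq_square field_simps\<close>)
  then show ?thesis by simp
qed

lemma Q1:
  "ennreal (arctan (u*t)^2/(1+t^2) * indicator {0..<1} u * indicator {0..} t) = (\<integral>\<^sup>+s. \<integral>\<^sup>+r. ennreal (Phi t u s r) \<partial>lborel \<partial>lborel)"
proof (cases "u \<in> {0..<1} \<and> t \<in> {0..}")
  case True
  hence ut: "0 \<le> u" "u < 1" "0 \<le> t" by auto
  let ?f = "\<lambda>s. ennreal (t/(1+s^2*t^2)) * indicator {0..u} s"
  have q: "1 + t^2 > 0" by (simp add: add_pos_nonneg)
  have at0: "0 \<le> arctan (u*t)" using ut by simp
  have "ennreal (arctan (u*t)^2/(1+t^2) * indicator {0..<1} u * indicator {0..} t)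
     = ennreal (1/(1+t^2)) * ennreal (arctan (u*t)) * ennreal (arctan (u*t))"
    using True q at0 by (simp add: ennreal_mult[symmetric] power2_eq_square)
  also have "\<dots> = ennreal (1/(1+t^2)) * (\<integral>\<^sup>+s. ?f s \<partial>lborel) * (\<integral>\<^sup>+r. ?f r \<partial>lborel)"
    by (simp add: arctan_int ut)
  also have "\<dots> = (\<integral>\<^sup>+s. \<integral>\<^sup>+r. ennreal (1/(1+t^2)) * ?f s * ?f r \<partial>lborel \<partial>lborel)"
  proof -
    have m: "?f \<in> borel_measurable lborel" by measurable
    have "(\<integral>\<^sup>+s. ?f s \<partial>lborel) * (\<integral>\<^sup>+r. ?f r \<partial>lborel) = (\<integral>\<^sup>+s. ?f s * (\<integral>\<^sup>+r. ?f r \<partial>lborel) \<partial>lborel)"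
      by (rule nn_integral_multc[symmetric, OF m])
    also have "\<dots> = (\<integral>\<^sup>+s. \<integral>\<^sup>+r. ?f s * ?f r \<partial>lborel \<partial>lborel)"
      by (intro nn_integral_cong nn_integral_cmult[symmetric, OF m])
    finally have "ennreal (1/(1+t^2)) * (\<integral>\<^sup>+s. ?f s \<partial>lborel) * (\<integral>\<^sup>+r. ?f r \<partial>lborel)
       = ennreal (1/(1+t^2)) * (\<integral>\<^sup>+s. \<integral>\<^sup>+r. ?f s * ?f r \<partial>lborel \<partial>lborel)" by (simp add: mult.assoc)
    also have "\<dots> = (\<integral>\<^sup>+s. ennreal (1/(1+t^2)) * (\<integral>\<^sup>+r. ?f s * ?f r \<partial>lborel) \<partial>lborel)"
      by (rule nn_integral_cmult[symmetric]) measurable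
    also have "\<dots> = (\<integral>\<^sup>+s. \<integral>\<^sup>+r. ennreal (1/(1+t^2)) * ?f s * ?f r \<partial>lborel \<partial>lborel)"
      by (intro nn_integral_cong) (simp add: nn_integral_cmult[symmetric] mult.assoc)
    finally show ?thesis .
  qed
  also have "\<dots> = (\<integral>\<^sup>+s. \<integral>\<^sup>+r. ennreal (Phi t u s r) \<partial>lborel \<partial>lborel)"
  proof (intro nn_integral_cong)
    fix s r :: real
    have p2: "1 + s^2*t^2 > 0" "1 + r^2*t^2 > 0" by (auto simp: add_pos_nonneg)
    show "ennreal (1/(1+t^2)) * ?f s * ?f r = ennreal (Phi t u s r)"
      unfolding Phi_def using True q p2 ut
      by (auto simp: indicator_def ennreal_mult[symmetric] power2_eq_square field_simps)
  qed
  finally show ?thesis .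
next
  case False
  then show ?thesis by (auto simp: Phi_def indicator_def)
qed

lemma Q2:
  "(\<integral>\<^sup>+t. \<integral>\<^sup>+u. \<integral>\<^sup>+s. \<integral>\<^sup>+r. ennreal (Phi t u s r) \<partial>lborel \<partial>lborel \<partial>lborel \<partial>lborel)
   = (\<integral>\<^sup>+u. \<integral>\<^sup>+s. \<integral>\<^sup>+r. \<integral>\<^sup>+t. ennreal (Phi t u s r) \<partial>lborel \<partial>lborel \<partial>lborel \<partial>lborel)"
proof -
  have "(\<integral>\<^sup>+t. \<integral>\<^sup>+u. \<integral>\<^sup>+s. \<integral>\<^sup>+r. ennreal (Phi t u s r) \<partial>lborel \<partial>lborel \<partial>lborel \<partial>lborel)
      = (\<integral>\<^sup>+u. \<integral>\<^sup>+t. \<integral>\<^sup>+s. \<integral>\<^sup>+r. ennreal (Phi t u s r) \<partial>lborel \<partial>lborel \<partial>lborel \<partial>lborel)"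
    by (rule lborel_pair.Fubini'[symmetric]) measurable
  also have "\<dots> = (\<integral>\<^sup>+u. \<integral>\<^sup>+s. \<integral>\<^sup>+t. \<integral>\<^sup>+r. ennreal (Phi t u s r) \<partial>lborel \<partial>lborel \<partial>lborel \<partial>lborel)"
    by (intro nn_integral_cong lborel_pair.Fubini'[symmetric]) measurable
  also have "\<dots> = (\<integral>\<^sup>+u. \<integral>\<^sup>+s. \<integral>\<^sup>+r. \<integral>\<^sup>+t. ennreal (Phi t u s r) \<partial>lborel \<partial>lborel \<partial>lborel \<partial>lborel)"
    by (intro nn_integral_cong lborel_pair.Fubini'[symmetric]) measurable
  finally show ?thesis .
qed

definition psi :: "real \<Rightarrow> real \<Rightarrow> real" where
  "psi s r = pi/(2*((1+s)*(1+r)*(s+r)))"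

lemma psi_nonneg: "0 \<le> s \<Longrightarrow> 0 \<le> r \<Longrightarrow> 0 \<le> psi s r"
  unfolding psi_def by simp

lemma Q3_inner:
  assumes "s \<noteq> 0" "r \<noteq> 0" "s \<noteq> r"
  shows "(\<integral>\<^sup>+t. ennreal (Phi t u s r) \<partial>lborel) = ennreal (psi s r * indicator {0..u} s * indicator {0..u} r * indicator {0..<1} u)"
proof (cases "s \<in> {0..u} \<and> r \<in> {0..u} \<and> u \<in> {0..<1}")
  case True
  hence a: "0 < s" "0 < r" "s < 1" "r < 1" "s \<noteq> r" using assms by auto
  have "(\<integral>\<^sup>+t. ennreal (Phi t u s r) \<partial>lborel) = (\<integral>\<^sup>+t. ennreal (t^2/((1+t^2)*(1+s^2*t^2)*(1+r^2*t^2))) * indicator {0..} t \<partial>lborel)"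
    using True by (intro nn_integral_cong) (auto simp: Phi_def indicator_def)
  also have "\<dots> = ennreal (pi/(2*((1+s)*(1+r)*(s+r))))" by (rule T_int[OF a])
  finally show ?thesis using True by (simp add: psi_def)
next
  case False
  then have "Phi t u s r = 0" for t by (auto simp: Phi_def indicator_def)
  then show ?thesis using False by (auto simp: indicator_def)
qed

lemma Q3_s:
  assumes s: "s \<noteq> 0"
  shows "(\<integral>\<^sup>+r. \<integral>\<^sup>+t. ennreal (Phi t u s r) \<partial>lborel \<partial>lborel) =
        (\<integral>\<^sup>+r. ennreal (psi s r * indicator {0..u} s * indicator {0..u} r * indicator {0..<1} u) \<partial>lborel)"
proof -
  have "AE r in lborel. r \<noteq> (0::real)" "AE r in lborel. r \<noteq> s" by (rule AE_lborel_singleton)+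
  then have "AE r in lborel. r \<noteq> 0 \<and> r \<noteq> s" by eventually_elim simp
  then show ?thesis
    by (rule nn_integral_cong_AE[OF eventually_mono]) (intro Q3_inner, use s in auto)
qed

lemma Q3:
  "(\<integral>\<^sup>+u. \<integral>\<^sup>+s. \<integral>\<^sup>+r. \<integral>\<^sup>+t. ennreal (Phi t u s r) \<partial>lborel \<partial>lborel \<partial>lborel \<partial>lborel)
   = (\<integral>\<^sup>+u. \<integral>\<^sup>+s. \<integral>\<^sup>+r. ennreal (psi s r * indicator {0..u} s * indicator {0..u} r * indicator {0..<1} u) \<partial>lborel \<partial>lborel \<partial>lborel)"
proof (rule nn_integral_cong)
  fix u :: real
  have "AE s in lborel. s \<noteq> (0::real)" by (rule AE_lborel_singleton)
  then show "(\<integral>\<^sup>+s. \<integral>\<^sup>+r. \<integral>\<^sup>+t. ennreal (Phi t u s r) \<partial>lborel \<partial>lborel \<partial>lborel) =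
        (\<integral>\<^sup>+s. \<integral>\<^sup>+r. ennreal (psi s r * indicator {0..u} s * indicator {0..u} r * indicator {0..<1} u) \<partial>lborel \<partial>lborel)"
    by (rule nn_integral_cong_AE[OF eventually_mono]) (rule Q3_s)
qed

lemma psi_meas[measurable]:
  assumes [measurable]: "f \<in> borel_measurable M" "g \<in> borel_measurable M"
  shows "(\<lambda>x. psi (f x) (g x)) \<in> borel_measurable M"
  unfolding psi_def by measurable

lemma psi_sym: "psi s r = psi r s"
  unfolding psi_def by (simp add: mult_ac add_ac)

lemma ind_split:
  fixes s r u :: real
  shows "indicator {0..u} s * indicator {0..u} r = indicator {0..u} s * indicator {0..s} r + (indicator {0..u} r * indicator {0..<r} s :: real)"
  by (auto simp: indicator_def)

lemma Q4:
  fixes u c :: real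
  assumes c: "0 \<le> c"
  shows "(\<integral>\<^sup>+s. \<integral>\<^sup>+r. ennreal (psi s r * indicator {0..u} s * indicator {0..u} r * c) \<partial>lborel \<partial>lborel)
  = 2 * (\<integral>\<^sup>+s. \<integral>\<^sup>+r. ennreal (psi s r * indicator {0..u} s * indicator {0..s} r * c) \<partial>lborel \<partial>lborel)"
proof -
  define X1 where "X1 s r = ennreal (psi s r * indicator {0..u} s * indicator {0..s} r * c)" for s r
  define X2 where "X2 s r = ennreal (psi s r * indicator {0..u} r * indicator {0..<r} s * c)" for s r
  have X1m[measurable]: "(\<lambda>(s,r). X1 s r) \<in> borel_measurable (lborel \<Otimes>\<^sub>M lborel)"
  proof -
    have e: "indicator {0..u} s * indicator {0..s} r = (if 0 \<le> s \<and> s \<le> u \<and> 0 \<le> r \<and> r \<le> s then 1 else (0::real))" for s r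
      by (auto simp: indicator_def)
    show ?thesis unfolding X1_def mult.assoc[symmetric] by (simp only: e mult.assoc) measurable
  qed
  have X2m[measurable]: "(\<lambda>(s,r). X2 s r) \<in> borel_measurable (lborel \<Otimes>\<^sub>M lborel)"
  proof -
    have e: "indicator {0..u} r * indicator {0..<r} s = (if 0 \<le> r \<and> r \<le> u \<and> 0 \<le> s \<and> s < r then 1 else (0::real))" for s r
      by (auto simp: indicator_def)
    show ?thesis unfolding X2_def mult.assoc[symmetric] by (simp only: e mult.assoc) measurable
  qed
  have pt: "ennreal (psi s r * indicator {0..u} s * indicator {0..u} r * c) = X1 s r + X2 s r" for s r
  proof -
    have n1: "0 \<le> psi s r * indicator {0..u} s * indicator {0..s} r * c"
      using c by (cases "s \<in> {0..u} \<and> r \<in> {0..s}") (auto simp: psi_nonneg)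
    have n2: "0 \<le> psi s r * indicator {0..u} r * indicator {0..<r} s * c"
      using c by (cases "r \<in> {0..u} \<and> s \<in> {0..<r}") (auto simp: psi_nonneg)
    have "psi s r * indicator {0..u} s * indicator {0..u} r * c =
       psi s r * indicator {0..u} s * indicator {0..s} r * c + psi s r * indicator {0..u} r * indicator {0..<r} s * c"
      using ind_split[of u s r] by (simp add: algebra_simps)
    then show ?thesis unfolding X1_def X2_def using n1 n2 by simp
  qed
  have "(\<integral>\<^sup>+s. \<integral>\<^sup>+r. ennreal (psi s r * indicator {0..u} s * indicator {0..u} r * c) \<partial>lborel \<partial>lborel)
      = (\<integral>\<^sup>+s. (\<integral>\<^sup>+r. X1 s r \<partial>lborel) + (\<integral>\<^sup>+r. X2 s r \<partial>lborel) \<partial>lborel)"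
    unfolding pt by (intro nn_integral_cong nn_integral_add) measurable
  also have "\<dots> = (\<integral>\<^sup>+s. \<integral>\<^sup>+r. X1 s r \<partial>lborel \<partial>lborel) + (\<integral>\<^sup>+s. \<integral>\<^sup>+r. X2 s r \<partial>lborel \<partial>lborel)"
    by (rule nn_integral_add) measurable
  also have "(\<integral>\<^sup>+s. \<integral>\<^sup>+r. X2 s r \<partial>lborel \<partial>lborel) = (\<integral>\<^sup>+r. \<integral>\<^sup>+s. X2 s r \<partial>lborel \<partial>lborel)"
    by (rule lborel_pair.Fubini'[symmetric]) measurable
  also have "\<dots> = (\<integral>\<^sup>+s. \<integral>\<^sup>+r. X1 s r \<partial>lborel \<partial>lborel)"
  proof (rule nn_integral_cong)
    fix a :: real
    show "(\<integral>\<^sup>+b. X2 b a \<partial>lborel) = (\<integral>\<^sup>+b. X1 a b \<partial>lborel)"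
    proof (rule nn_integral_cong_AE)
      have "AE b in lborel. b \<noteq> a" by (rule AE_lborel_singleton)
      then show "AE b in lborel. X2 b a = X1 a b"
        by eventually_elim (auto simp: X1_def X2_def psi_sym indicator_def)
    qed
  qed
  finally show ?thesis unfolding X1_def by (simp add: mult_2)
qed

definition phi :: "real \<Rightarrow> real" where
  "phi s = pi/2 * (ln 2 - ln (1+s)) / ((1+s)*(1-s))"

lemma phi_nonneg: "0 \<le> s \<Longrightarrow> s < 1 \<Longrightarrow> 0 \<le> phi s"
proof -
  assume s: "0 \<le> s" "s < 1"
  have "ln (1+s) \<le> ln 2" using s by (subst ln_le_cancel_iff) auto
  moreover have "(1+s)*(1-s) > 0" using s by simp
  ultimately show ?thesis unfolding phi_def by (intro divide_nonneg_pos mult_nonneg_nonneg) auto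
qed

lemma Q5:
  assumes s: "0 < s" "s < 1"
  shows "(\<integral>\<^sup>+r. ennreal (psi s r) * indicator {0..s} r \<partial>lborel) = ennreal (phi s)"
proof -
  define k where "k = pi/(2*(1+s)*(1-s))"
  define G where "G r = k * (ln (s+r) - ln (1+r))" for r
  have "(\<integral>\<^sup>+r. ennreal (psi s r) * indicator {0..s} r \<partial>lborel) = ennreal (G s - G 0)"
  proof (rule nn_integral_FTC_Icc)
    show "psi s \<in> borel_measurable borel" unfolding psi_def by measurable
    show "0 \<le> psi s r" if "r \<in> {0..s}" for r using that s by (intro psi_nonneg) auto
    show "s \<ge> 0" using s by simp
    show "DERIV G r :> psi s r" if "r \<in> {0..s}" for r
    proof -
      have r: "0 \<le> r" using that by auto
      have p: "s + r > 0" "1 + r > 0" "1 - s > 0" "1 + s > 0" using s r by auto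
      have d: "DERIV (\<lambda>r. ln (s+r) - ln (1+r)) r :> 1/(s+r) - 1/(1+r)"
        using p by (auto intro!: derivative_eq_intros)
      have e1: "1/(s+r) - 1/(1+r) = (1-s)/((s+r)*(1+r))" using p by (simp add: field_simps)
      have aux: "\<And>a b c d. (a::real) \<noteq> 0 \<Longrightarrow> b \<noteq> 0 \<Longrightarrow> c \<noteq> 0 \<Longrightarrow> d \<noteq> 0 \<Longrightarrow>
          pi/(2*b*a) * (a/(c*d)) = pi/(2*(b*d*c))" by (simp add: field_simps)
      have e: "k * (1/(s+r) - 1/(1+r)) = psi s r"
        unfolding k_def psi_def e1 using p by (intro aux) auto
      show ?thesis unfolding G_def[abs_def] e[symmetric] by (rule DERIV_cmult[OF d])
    qed
  qed
  also have "G s - G 0 = phi s"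
  proof -
    have ss: "s + s = 2 * s" by simp
    have l2: "ln (s+s) = ln 2 + ln s" unfolding ss using s by (intro ln_mult_pos) auto
    have g0: "G 0 = k * ln s" unfolding G_def by simp
    have gs: "G s = k * (ln 2 + ln s - ln (1+s))" unfolding G_def l2 ..
    have "G s - G 0 = k * (ln 2 - ln (1+s))" unfolding g0 gs by (simp add: right_diff_distrib distrib_left)
    also have "\<dots> = phi s" unfolding k_def phi_def by simp
    finally show ?thesis .
  qed
  finally show ?thesis .
qed

lemma Q6:
  fixes u :: real
  shows "(\<integral>\<^sup>+s. \<integral>\<^sup>+r. ennreal (psi s r * indicator {0..u} s * indicator {0..s} r * indicator {0..<1} u) \<partial>lborel \<partial>lborel)
    = (\<integral>\<^sup>+s. ennreal (phi s * indicator {0..u} s * indicator {0..<1} u) \<partial>lborel)"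
proof (rule nn_integral_cong_AE)
  have "AE s in lborel. s \<noteq> (0::real)" by (rule AE_lborel_singleton)
  then show "AE s in lborel. (\<integral>\<^sup>+r. ennreal (psi s r * indicator {0..u} s * indicator {0..s} r * indicator {0..<1} u) \<partial>lborel)
      = ennreal (phi s * indicator {0..u} s * indicator {0..<1} u)"
  proof eventually_elim
    case (elim s)
    show ?case
    proof (cases "s \<in> {0..u} \<and> u \<in> {0..<1}")
      case True
      hence s: "0 < s" "s < 1" using elim by auto
      have "(\<integral>\<^sup>+r. ennreal (psi s r * indicator {0..u} s * indicator {0..s} r * indicator {0..<1} u) \<partial>lborel)
          = (\<integral>\<^sup>+r. ennreal (psi s r) * indicator {0..s} r \<partial>lborel)"
        using True by (intro nn_integral_cong) (auto simp: indicator_def)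
      also have "\<dots> = ennreal (phi s)" by (rule Q5[OF s])
      finally show ?thesis using True by simp
    next
      case False
      then show ?thesis by (auto simp: indicator_def)
    qed
  qed
qed

lemma phi_meas[measurable]: "phi \<in> borel_measurable borel"
  unfolding phi_def by measurable

lemma Q7:
  "(\<integral>\<^sup>+u. \<integral>\<^sup>+s. ennreal (phi s * indicator {0..u} s * indicator {0..<1} u) \<partial>lborel \<partial>lborel)
   = (\<integral>\<^sup>+s. ennreal (pi/2 * (ln 2 - ln (1+s)) / (1+s)) * indicator {0..<1} s \<partial>lborel)"
proof -
  have m: "(\<lambda>(u,s). ennreal (phi s * indicator {0..u} s * indicator {0..<1} u)) \<in> borel_measurable (lborel \<Otimes>\<^sub>M lborel)"
  proof -
    have e: "indicator {0..u} s * indicator {0..<1} u = (if 0 \<le> s \<and> s \<le> u \<and> 0 \<le> u \<and> u < 1 then 1 else (0::real))" for s u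
      by (auto simp: indicator_def)
    show ?thesis unfolding mult.assoc e by measurable
  qed
  have "(\<integral>\<^sup>+u. \<integral>\<^sup>+s. ennreal (phi s * indicator {0..u} s * indicator {0..<1} u) \<partial>lborel \<partial>lborel)
     = (\<integral>\<^sup>+s. \<integral>\<^sup>+u. ennreal (phi s * indicator {0..u} s * indicator {0..<1} u) \<partial>lborel \<partial>lborel)"
    by (rule lborel_pair.Fubini') (use m in simp)
  also have "\<dots> = (\<integral>\<^sup>+s. ennreal (pi/2 * (ln 2 - ln (1+s)) / (1+s)) * indicator {0..<1} s \<partial>lborel)"
  proof (rule nn_integral_cong)
    fix s :: real
    show "(\<integral>\<^sup>+u. ennreal (phi s * indicator {0..u} s * indicator {0..<1} u) \<partial>lborel) =
      ennreal (pi/2 * (ln 2 - ln (1+s)) / (1+s)) * indicator {0..<1} s"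
    proof (cases "s \<in> {0..<1}")
      case True
      hence s: "0 \<le> s" "s < 1" by auto
      have "(\<integral>\<^sup>+u. ennreal (phi s * indicator {0..u} s * indicator {0..<1} u) \<partial>lborel)
          = (\<integral>\<^sup>+u. ennreal (phi s) * indicator {s..<1} u \<partial>lborel)"
        using s by (intro nn_integral_cong) (auto simp: indicator_def)
      also have "\<dots> = ennreal (phi s) * ennreal (1 - s)"
        using s by (simp add: nn_integral_cmult_indicator)
      also have "\<dots> = ennreal (phi s * (1 - s))"
        using s phi_nonneg[OF s] by (simp add: ennreal_mult)
      also have "phi s * (1 - s) = pi/2 * (ln 2 - ln (1+s)) / (1+s)"
      proof -
        have aux: "\<And>X b c. (b::real) \<noteq> 0 \<Longrightarrow> c \<noteq> 0 \<Longrightarrow> X/(c*b) * b = X/c" by simp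
        show ?thesis unfolding phi_def using s by (intro aux) auto
      qed
      finally show ?thesis using True by simp
    next
      case False
      then have "ennreal (phi s * indicator {0..u} s * indicator {0..<1} u) = 0" for u :: real
        by (auto simp: indicator_def)
      then show ?thesis using False by (subst nn_integral_cong[where v = "\<lambda>_. 0"]) auto
    qed
  qed
  finally show ?thesis .
qed

lemma Q8: "(\<integral>\<^sup>+s. ennreal (pi/2 * (ln 2 - ln (1+s)) / (1+s)) * indicator {0..<1} s \<partial>lborel) = ennreal (pi/4 * (ln 2)^2)"
proof -
  define G where "G s = pi/2 * (ln 2 * ln (1+s) - (ln (1+s))^2/2)" for s :: real
  have "(\<integral>\<^sup>+s. ennreal (pi/2 * (ln 2 - ln (1+s)) / (1+s)) * indicator {0..<1} s \<partial>lborel)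
      = (\<integral>\<^sup>+s. ennreal (pi/2 * (ln 2 - ln (1+s)) / (1+s)) * indicator {0..1} s \<partial>lborel)"
  proof (rule nn_integral_cong_AE)
    have "AE s in lborel. s \<noteq> (1::real)" by (rule AE_lborel_singleton)
    then show "AE s in lborel. ennreal (pi/2 * (ln 2 - ln (1+s)) / (1+s)) * indicator {0..<1} s
        = ennreal (pi/2 * (ln 2 - ln (1+s)) / (1+s)) * indicator {0..1} s"
      by eventually_elim (auto simp: indicator_def)
  qed
  also have "\<dots> = ennreal (G 1 - G 0)"
  proof (rule nn_integral_FTC_Icc)
    show "(\<lambda>s. pi/2 * (ln 2 - ln (1+s)) / (1+s)) \<in> borel_measurable borel" by measurable
    show "DERIV G s :> pi/2 * (ln 2 - ln (1+s)) / (1+s)" if "s \<in> {0..1}" for s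
    proof -
      have p: "1 + s > 0" using that by auto
      have dL: "DERIV (\<lambda>s. ln (1+s)) s :> 1/(1+s)"
        using p by (auto intro!: derivative_eq_intros simp: inverse_eq_divide)
      have d: "DERIV (\<lambda>s. pi/2 * (ln 2 * ln (1+s) - ln (1+s) * ln (1+s) / 2)) s :>
          pi/2 * (ln 2 * (1/(1+s)) - (1/(1+s) * ln (1+s) + 1/(1+s) * ln (1+s)) / 2)"
        by (intro DERIV_cmult DERIV_diff DERIV_cdivide DERIV_mult dL)
      have G: "G = (\<lambda>s. pi/2 * (ln 2 * ln (1+s) - ln (1+s) * ln (1+s) / 2))"
        unfolding G_def[abs_def] by (simp add: power2_eq_square)
      have e: "pi/2 * (ln 2 * (1/(1+s)) - (1/(1+s) * ln (1+s) + 1/(1+s) * ln (1+s)) / 2) = pi/2 * (ln 2 - ln (1+s)) / (1+s)"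
      proof -
        have aux: "\<And>A L q. (q::real) \<noteq> 0 \<Longrightarrow> pi/2 * (A * (1/q) - (1/q * L + 1/q * L) / 2) = pi/2 * (A - L) / q"
          by (simp add: field_simps)
        show ?thesis using p by (intro aux) auto
      qed
      show ?thesis unfolding G using d e by (rule DERIV_cong)
    qed
    show "0 \<le> pi/2 * (ln 2 - ln (1+s)) / (1+s)" if "s \<in> {0..1}" for s
    proof -
      have "ln (1+s) \<le> ln 2" using that by (subst ln_le_cancel_iff) auto
      then show ?thesis using that by (intro divide_nonneg_pos mult_nonneg_nonneg) auto
    qed
  qed simp
  also have "G 1 - G 0 = pi/4 * (ln 2)^2" unfolding G_def by (simp add: power2_eq_square)
  finally show ?thesis .
qed

lemma Qval: "(\<integral>\<^sup>+t. \<integral>\<^sup>+u. ennreal (arctan (u*t)^2/(1+t^2) * indicator {0..<1} u * indicator {0..} t) \<partial>lborel \<partial>lborel)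
  = ennreal (pi/2 * (ln 2)^2)"
proof -
  have "(\<integral>\<^sup>+t. \<integral>\<^sup>+u. ennreal (arctan (u*t)^2/(1+t^2) * indicator {0..<1} u * indicator {0..} t) \<partial>lborel \<partial>lborel)
     = (\<integral>\<^sup>+t. \<integral>\<^sup>+u. \<integral>\<^sup>+s. \<integral>\<^sup>+r. ennreal (Phi t u s r) \<partial>lborel \<partial>lborel \<partial>lborel \<partial>lborel)"
    by (intro nn_integral_cong Q1)
  also have "\<dots> = (\<integral>\<^sup>+u. \<integral>\<^sup>+s. \<integral>\<^sup>+r. \<integral>\<^sup>+t. ennreal (Phi t u s r) \<partial>lborel \<partial>lborel \<partial>lborel \<partial>lborel)"
    by (rule Q2)
  also have "\<dots> = (\<integral>\<^sup>+u. \<integral>\<^sup>+s. \<integral>\<^sup>+r. ennreal (psi s r * indicator {0..u} s * indicator {0..u} r * indicator {0..<1} u) \<partial>lborel \<partial>lborel \<partial>lborel)"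
    by (rule Q3)
  also have "\<dots> = (\<integral>\<^sup>+u. 2 * (\<integral>\<^sup>+s. \<integral>\<^sup>+r. ennreal (psi s r * indicator {0..u} s * indicator {0..s} r * indicator {0..<1} u) \<partial>lborel \<partial>lborel) \<partial>lborel)"
    by (rule nn_integral_cong, rule Q4) simp
  also have "\<dots> = (\<integral>\<^sup>+u. 2 * (\<integral>\<^sup>+s. ennreal (phi s * indicator {0..u} s * indicator {0..<1} u) \<partial>lborel) \<partial>lborel)"
    by (simp only: Q6)
  also have "\<dots> = 2 * (\<integral>\<^sup>+u. \<integral>\<^sup>+s. ennreal (phi s * indicator {0..u} s * indicator {0..<1} u) \<partial>lborel \<partial>lborel)"
  proof (rule nn_integral_cmult)
    have e: "phi s * indicator {0..u} s * indicator {0..<1} u = (if 0 \<le> s \<and> s \<le> u \<and> 0 \<le> u \<and> u < 1 then phi s else 0)" for s u :: real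
      by (auto simp: indicator_def)
    show "(\<lambda>u. \<integral>\<^sup>+s. ennreal (phi s * indicator {0..u} s * indicator {0..<1} u) \<partial>lborel) \<in> borel_measurable lborel"
      unfolding e by measurable
  qed
  also have "\<dots> = 2 * ennreal (pi/4 * (ln 2)^2)" by (simp only: Q7 Q8)
  also have "\<dots> = ennreal (pi/2 * (ln 2)^2)"
    using ennreal_mult[of 2 "pi/4 * (ln 2)^2"] by simp
  finally show ?thesis .
qed

lemma Pval: "(\<integral>\<^sup>+t. \<integral>\<^sup>+u. ennreal (arctan (u*t)^2/(1+t^2) * indicator {-1<..<1} u) \<partial>lborel \<partial>lborel)
  = ennreal (2*pi*(ln 2)^2)"
proof -
  define A where "A t = (\<integral>\<^sup>+u. ennreal (arctan (u*t)^2/(1+t^2) * indicator {0..<1} u) \<partial>lborel)" for t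
  have Am[measurable]: "A \<in> borel_measurable borel" unfolding A_def[abs_def] by measurable
  have inner: "(\<integral>\<^sup>+u. ennreal (arctan (u*t)^2/(1+t^2) * indicator {-1<..<1} u) \<partial>lborel) = 2 * A t" for t
  proof -
    have "(\<integral>\<^sup>+u. ennreal (arctan (u*t)^2/(1+t^2) * indicator {-1<..<1} u) \<partial>lborel)
      = 2 * (\<integral>\<^sup>+u. ennreal (arctan (u*t)^2/(1+t^2) * indicator {-1<..<1} u) * indicator {0..} u \<partial>lborel)"
      by (rule even_nn) (auto simp: arctan_minus indicator_def)
    also have "(\<integral>\<^sup>+u. ennreal (arctan (u*t)^2/(1+t^2) * indicator {-1<..<1} u) * indicator {0..} u \<partial>lborel) = A t"
      unfolding A_def by (intro nn_integral_cong) (auto simp: indicator_def)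
    finally show ?thesis .
  qed
  have "(\<integral>\<^sup>+t. \<integral>\<^sup>+u. ennreal (arctan (u*t)^2/(1+t^2) * indicator {-1<..<1} u) \<partial>lborel \<partial>lborel)
      = (\<integral>\<^sup>+t. 2 * A t \<partial>lborel)" by (simp only: inner)
  also have "\<dots> = 2 * (\<integral>\<^sup>+t. 2 * A t * indicator {0..} t \<partial>lborel)"
    by (rule even_nn) (auto simp: A_def arctan_minus)
  also have "(\<integral>\<^sup>+t. 2 * A t * indicator {0..} t \<partial>lborel)
     = 2 * (\<integral>\<^sup>+t. \<integral>\<^sup>+u. ennreal (arctan (u*t)^2/(1+t^2) * indicator {0..<1} u * indicator {0..} t) \<partial>lborel \<partial>lborel)"
  proof -
    have "(\<integral>\<^sup>+t. 2 * A t * indicator {0..} t \<partial>lborel) = 2 * (\<integral>\<^sup>+t. A t * indicator {0..} t \<partial>lborel)"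
      by (subst nn_integral_cmult[symmetric]) (auto simp: mult.assoc)
    also have "(\<integral>\<^sup>+t. A t * indicator {0..} t \<partial>lborel)
       = (\<integral>\<^sup>+t. \<integral>\<^sup>+u. ennreal (arctan (u*t)^2/(1+t^2) * indicator {0..<1} u * indicator {0..} t) \<partial>lborel \<partial>lborel)"
    proof (rule nn_integral_cong)
      fix t :: real
      show "A t * indicator {0..} t = (\<integral>\<^sup>+u. ennreal (arctan (u*t)^2/(1+t^2) * indicator {0..<1} u * indicator {0..} t) \<partial>lborel)"
        unfolding A_def by (cases "t \<in> {0..}") (auto simp: indicator_def)
    qed
    finally show ?thesis .
  qed
  also have "2 * (2 * (\<integral>\<^sup>+t. \<integral>\<^sup>+u. ennreal (arctan (u*t)^2/(1+t^2) * indicator {0..<1} u * indicator {0..} t) \<partial>lborel \<partial>lborel))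
     = 2 * (2 * ennreal (pi/2 * (ln 2)^2))" by (simp only: Qval)
  also have "\<dots> = ennreal (2*pi*(ln 2)^2)"
  proof -
    have a: "ennreal (2 * (pi/2 * (ln 2)^2)) = 2 * ennreal (pi/2 * (ln 2)^2)" by (subst ennreal_mult) auto
    have b: "ennreal (2 * (2 * (pi/2 * (ln 2)^2))) = 2 * ennreal (2 * (pi/2 * (ln 2)^2))" by (subst ennreal_mult) auto
    have c: "2 * (2 * (pi/2 * (ln 2)^2)) = 2*pi*(ln 2)^2" by simp
    show ?thesis unfolding c[symmetric] b a ..
  qed
  finally show ?thesis .
qed

lemma sphere_finite: "finite_measure sphere_uniform"
proof (rule finite_measureI)
  have N[measurable]: "(\<lambda>x::real^3. x /\<^sub>R norm x) \<in> borel_measurable borel" by measurable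
  have "emeasure sphere_uniform (space sphere_uniform) = emeasure (uniform_measure lborel (ball (0::real^3) 1)) UNIV"
    unfolding sphere_uniform_def
    by (subst emeasure_distr) (auto simp: measurable_cong_sets[OF sets_uniform_measure refl])
  also have "\<dots> = emeasure lborel (ball (0::real^3) 1) / emeasure lborel (ball (0::real^3) 1)"
    by (subst emeasure_uniform_measure) auto
  also have "\<dots> = 1"
    by (rule ennreal_divide_self) (auto simp: emeasure_ball unit_ball_vol_3)
  finally show "emeasure sphere_uniform (space sphere_uniform) \<noteq> \<infinity>" by simp
qed

theorem mainTheorem7:
  defines "B \<equiv> vector [1, 0, 0] :: real^3"
      and "C \<equiv> vector [0, 1, 0] :: real^3"
  shows "integrable sphere_uniform (\<lambda>A. dihedral_angle A B C)
       \<and> (\<integral>A. dihedral_angle A B C \<partial>sphere_uniform) = pi / 2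
       \<and> integrable sphere_uniform (\<lambda>A. (dihedral_angle A B C)\<^sup>2)
       \<and> (\<integral>A. (dihedral_angle A B C)\<^sup>2 \<partial>sphere_uniform) = pi\<^sup>2 / 4 + (ln 2)\<^sup>2"
proof -
  interpret finite_measure sphere_uniform by (rule sphere_finite)
  have eqD: "dihedral_angle A B C = D (A$1) (A$2) (A$3)" for A
    unfolding B_def C_def by (rule dihedral_D)
  have sets: "sets sphere_uniform = sets borel" by (simp add: sphere_uniform_def)
  have m1: "(\<lambda>A. dihedral_angle A B C) \<in> borel_measurable sphere_uniform"
    unfolding eqD measurable_cong_sets[OF sets refl] by measurable
  have m2: "(\<lambda>A. (dihedral_angle A B C)^2) \<in> borel_measurable sphere_uniform"
    using m1 by measurable
  have bnd: "0 \<le> dihedral_angle A B C" "dihedral_angle A B C \<le> pi" for A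
    unfolding eqD by (rule D_bounds)+
  have i1: "integrable sphere_uniform (\<lambda>A. dihedral_angle A B C)"
    by (rule integrable_const_bound[where B=pi]) (use bnd m1 in auto)
  have i2: "integrable sphere_uniform (\<lambda>A. (dihedral_angle A B C)^2)"
  proof (rule integrable_const_bound[where B="pi^2"])
    show "AE x in sphere_uniform. norm ((dihedral_angle x B C)^2) \<le> pi^2"
      using bnd by (auto intro!: power_mono)
  qed (rule m2)
  have nn1: "(\<integral>\<^sup>+A. ennreal (dihedral_angle A B C) \<partial>sphere_uniform) = ennreal (pi/2)"
  proof -
    have "(\<integral>\<^sup>+A. ennreal (dihedral_angle A B C) \<partial>sphere_uniform) = (\<integral>\<^sup>+A. ennreal (abs (dihedral_angle A B C)) \<partial>sphere_uniform)"
      using bnd by simp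
    also have "\<dots> = ennreal (1/(2*pi)) * (\<integral>\<^sup>+t. \<integral>\<^sup>+u. ennreal (\<bar>pi/2 + arctan (u*t)\<bar> / (1+t^2) * indicator {-1<..<1} u) \<partial>lborel \<partial>lborel)"
      unfolding B_def C_def by (rule master) auto
    also have "\<dots> = ennreal (1/(2*pi)) * ennreal (pi^2)" by (simp only: E1)
    also have "\<dots> = ennreal (pi/2)" by (subst ennreal_mult[symmetric]) (auto simp: power2_eq_square)
    finally show ?thesis .
  qed
  have nn2: "(\<integral>\<^sup>+A. ennreal ((dihedral_angle A B C)^2) \<partial>sphere_uniform) = ennreal (pi^2/4 + (ln 2)^2)"
  proof -
    have "(\<integral>\<^sup>+A. ennreal ((dihedral_angle A B C)^2) \<partial>sphere_uniform)
      = ennreal (1/(2*pi)) * (\<integral>\<^sup>+t. \<integral>\<^sup>+u. ennreal ((pi/2 + arctan (u*t))^2 / (1+t^2) * indicator {-1<..<1} u) \<partial>lborel \<partial>lborel)"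
      unfolding B_def C_def by (rule master[of "\<lambda>x. x^2"]) auto
    also have "\<dots> = ennreal (1/(2*pi)) * (ennreal (pi^3/2) + ennreal (2*pi*(ln 2)^2))" by (simp only: E2 Pval)
    also have "\<dots> = ennreal (1/(2*pi) * (pi^3/2 + 2*pi*(ln 2)^2))"
    proof -
      have "ennreal (pi^3/2) + ennreal (2*pi*(ln 2)^2) = ennreal (pi^3/2 + 2*pi*(ln 2)^2)"
        by (rule ennreal_plus[symmetric]) auto
      moreover have "ennreal (1/(2*pi)) * ennreal (pi^3/2 + 2*pi*(ln 2)^2) = ennreal (1/(2*pi) * (pi^3/2 + 2*pi*(ln 2)^2))"
        by (rule ennreal_mult[symmetric]) auto
      ultimately show ?thesis by simp
    qed
    also have "1/(2*pi) * (pi^3/2 + 2*pi*(ln 2)^2) = pi^2/4 + (ln 2)^2"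
      by (simp add: field_simps power2_eq_square power3_eq_cube)
    finally show ?thesis .
  qed
  have v1: "(\<integral>A. dihedral_angle A B C \<partial>sphere_uniform) = pi / 2"
    by (subst integral_eq_nn_integral) (use m1 bnd in \<open>auto simp: nn1\<close>)
  have v2: "(\<integral>A. (dihedral_angle A B C)\<^sup>2 \<partial>sphere_uniform) = pi\<^sup>2 / 4 + (ln 2)\<^sup>2"
    apply (subst integral_eq_nn_integral[OF m2])
     apply simp
    apply (simp only: nn2)
    by (rule enn2real_ennreal) (auto intro: add_nonneg_nonneg)
  show ?thesis using i1 i2 v1 v2 by simp
qed

end
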